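(* Let $G\subset\mathbb{C}$ be a simply connected domain, let $\mathcal{S}\subset G$ be a smooth Jordan curve with bounded face $D$, let $\Gamma\subset\mathbb{C}$ be a smooth Jordan curve with bounded face $\Omega_-$ and unbounded face $\Omega_+$ (with $\infty\in\Omega_+$), and let $f:G\to\hat{\mathbb{C}}$ be meromorphic. Suppose there are non-negative integers $n_-,n_+$ such that $\mathcal{N}_f(w)=n_-$ for all $w\in\Omega_-$, $\mathcal{N}_f(w)=n_+$ for all $w\in\Omega_+$, and $\mathcal{N}_f(w)=\min(n_-,n_+)$ for all $w\in\Gamma$. Then $f(\mathcal{S})\subset\Gamma$ and $f$ has no critical point on $\mathcal{S}$.
   Context: For $w\in\hat{\mathbb{C}}$, $\mathcal{N}_f(w)$ denotes the number of preimages of $w$ under $f$ lying in $D$ (the bounded face of $\mathcal{S}$), counted with multiplicity. A critical point of a meromorphic function is a point at which it is not locally injective. *)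

theory Defs
  imports "HOL-Analysis.Analysis" "HOL-Library.Extended_Nat"
begin

text \<open>The Riemann sphere is modelled as complex option: Some w is the finite
point w, None is the point at infinity.\<close>

type_synonym csphere = "complex option"

definition smooth_jordan_curve :: "complex set \<Rightarrow> bool" where
  "smooth_jordan_curve S \<longleftrightarrow>
     (\<exists>\<gamma> \<gamma>'. simple_path \<gamma> \<and> pathfinish \<gamma> = pathstart \<gamma> \<and> path_image \<gamma> = S \<and>
        (\<forall>t\<in>{0..1}. (\<gamma> has_vector_derivative \<gamma>' t) (at t within {0..1}) \<and> \<gamma>' t \<noteq> 0) \<and>
        continuous_on {0..1} \<gamma>' \<and> \<gamma>' 0 = \<gamma>' 1)"

definition meromorphic_sphere :: "(complex \<Rightarrow> csphere) \<Rightarrow> complex set \<Rightarrow> bool" where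
  "meromorphic_sphere f G \<longleftrightarrow>
     open G \<and>
     (\<forall>z\<in>G. \<not> z islimpt {p\<in>G. f p = None}) \<and>
     (\<lambda>z. the (f z)) holomorphic_on {z\<in>G. f z \<noteq> None} \<and>
     (\<forall>p\<in>G. f p = None \<longrightarrow> filterlim (\<lambda>z. the (f z)) at_infinity (at p))"

definition local_chart :: "(complex \<Rightarrow> csphere) \<Rightarrow> complex \<Rightarrow> complex \<Rightarrow> complex" where
  "local_chart f z =
     (if f z = None then (\<lambda>x. case f x of None \<Rightarrow> 0 | Some v \<Rightarrow> inverse v)
      else (\<lambda>x. case f x of None \<Rightarrow> 0 | Some v \<Rightarrow> v))"

text \<open>Multiplicity of z as a preimage of f z: the order of the first
non-vanishing derivative (order of the zero of f - f z, resp. of 1/f at a pole);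
infinite if all derivatives vanish.\<close>
definition mero_mult :: "(complex \<Rightarrow> csphere) \<Rightarrow> complex \<Rightarrow> enat" where
  "mero_mult f z =
     (if \<exists>n\<ge>1. (deriv ^^ n) (local_chart f z) z \<noteq> 0
      then enat (LEAST n. n \<ge> 1 \<and> (deriv ^^ n) (local_chart f z) z \<noteq> 0)
      else \<infinity>)"

definition count_preimages :: "(complex \<Rightarrow> csphere) \<Rightarrow> complex set \<Rightarrow> csphere \<Rightarrow> enat" where
  "count_preimages f D w =
     (if finite {z\<in>D. f z = w} then (\<Sum>z\<in>{z\<in>D. f z = w}. mero_mult f z) else \<infinity>)"

definition critical_point :: "(complex \<Rightarrow> csphere) \<Rightarrow> complex \<Rightarrow> bool" where
  "critical_point f z \<longleftrightarrow> \<not> (\<exists>e>0. inj_on f (ball z e))"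

end

theory Submission
  imports Defs "HOL-Complex_Analysis.Complex_Analysis"
begin


definition cv :: "csphere \<Rightarrow> csphere \<Rightarrow> complex" where
  "cv w0 w = (if w0 = None then (case w of None \<Rightarrow> 0 | Some a \<Rightarrow> inverse a)
              else (case w of None \<Rightarrow> 0 | Some a \<Rightarrow> a))"

lemma local_chart_cv: "local_chart f p = (\<lambda>x. cv (f p) (f x))"
  by (auto simp: local_chart_def cv_def fun_eq_iff)

definition near :: "csphere \<Rightarrow> real \<Rightarrow> csphere \<Rightarrow> bool" where
  "near w0 e w = (case w0 of None \<Rightarrow> (w = None \<or> (\<exists>a. w = Some a \<and> a \<noteq> 0 \<and> cmod (inverse a) < e))
                 | Some b \<Rightarrow> (\<exists>a. w = Some a \<and> cmod (a - b) < e))"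

lemma good_ball:
  assumes mf: "meromorphic_sphere f G" and p: "p \<in> G"
  shows "\<exists>r>0. ball p r \<subseteq> G \<and> (\<forall>x\<in>ball p r. x \<noteq> p \<longrightarrow> (\<exists>v. f x = Some v \<and> (f p = None \<longrightarrow> 1 < cmod v)))
              \<and> local_chart f p holomorphic_on ball p r"
proof -
  have oG: "open G" and nl: "\<not> p islimpt {q\<in>G. f q = None}"
    and hol: "(\<lambda>z. the (f z)) holomorphic_on {z\<in>G. f z \<noteq> None}"
    and lim: "\<And>q. q \<in> G \<Longrightarrow> f q = None \<Longrightarrow> filterlim (\<lambda>z. the (f z)) at_infinity (at q)"
    using mf p unfolding meromorphic_sphere_def by auto
  obtain e1 where e1: "e1 > 0" "\<And>x. x \<in> {q\<in>G. f q = None} \<Longrightarrow> x \<noteq> p \<Longrightarrow> dist x p \<ge> e1"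
  proof -
    from nl obtain e where "e > 0" "\<forall>x\<in>{q\<in>G. f q = None}. x \<noteq> p \<longrightarrow> \<not> dist x p < e"
      unfolding islimpt_approachable by blast
    then show ?thesis using that[of e] by (simp add: not_less)
  qed
  obtain e2 where e2: "e2 > 0" "ball p e2 \<subseteq> G" using oG p openE by blast
  obtain e3 where e3: "e3 > 0" "f p = None \<Longrightarrow> (\<forall>x. x \<noteq> p \<and> dist x p < e3 \<longrightarrow> 1 < cmod (the (f x)))"
  proof (cases "f p = None")
    case True
    have "filterlim (\<lambda>z. the (f z)) at_infinity (at p)" using lim[OF p True] .
    then have "\<forall>r>0. eventually (\<lambda>x. r \<le> norm (the (f x))) (at p)"
      using filterlim_at_infinity[of 0 "(\<lambda>z. the (f z))" "at p"] by simp
    then have "eventually (\<lambda>x. 2 \<le> norm (the (f x))) (at p)" by simp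
    then obtain d where "d > 0" "\<And>x. x \<noteq> p \<Longrightarrow> dist x p < d \<Longrightarrow> 2 \<le> cmod (the (f x))"
      unfolding eventually_at by auto
    then show ?thesis using that[of d] by force
  next
    case False then show ?thesis using that[of 1] by auto
  qed
  define r where "r = min e1 (min e2 e3)"
  have r: "r > 0" using e1 e2 e3 by (simp add: r_def)
  have sub: "ball p r \<subseteq> G" using e2 by (auto simp: r_def)
  have np: "\<And>x. x \<in> ball p r \<Longrightarrow> x \<noteq> p \<Longrightarrow> f x \<noteq> None"
  proof
    fix x assume x: "x \<in> ball p r" "x \<noteq> p" "f x = None"
    then have "x \<in> G" using sub by auto
    then have "dist x p \<ge> e1" using e1 x by auto
    then show False using x by (auto simp: r_def dist_commute)
  qed
  have A: "\<forall>x\<in>ball p r. x \<noteq> p \<longrightarrow> (\<exists>v. f x = Some v \<and> (f p = None \<longrightarrow> 1 < cmod v))"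
  proof (intro ballI impI)
    fix x assume x: "x \<in> ball p r" "x \<noteq> p"
    then obtain v where v: "f x = Some v" using np by blast
    have "f p = None \<longrightarrow> 1 < cmod v"
    proof
      assume "f p = None"
      then have "1 < cmod (the (f x))" using e3(2) x by (auto simp: r_def dist_commute)
      then show "1 < cmod v" using v by simp
    qed
    then show "\<exists>v. f x = Some v \<and> (f p = None \<longrightarrow> 1 < cmod v)" using v by (intro exI[of _ v]) simp
  qed
  have H: "local_chart f p holomorphic_on ball p r"
  proof (cases "f p = None")
    case False
    have sub2: "ball p r \<subseteq> {z\<in>G. f z \<noteq> None}"
    proof
      fix x assume x: "x \<in> ball p r"
      then show "x \<in> {z\<in>G. f z \<noteq> None}" using sub np[OF x] False by (cases "x = p") auto
    qed
    have "(\<lambda>z. the (f z)) holomorphic_on ball p r" using holomorphic_on_subset[OF hol sub2] .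
    moreover have "\<And>x. x \<in> ball p r \<Longrightarrow> the (f x) = local_chart f p x"
      using sub2 False by (auto simp: local_chart_def split: option.split)
    ultimately show ?thesis by (rule holomorphic_transform)
  next
    case True
    have sub2: "ball p r - {p} \<subseteq> {z\<in>G. f z \<noteq> None}" using sub np by auto
    have h1: "(\<lambda>z. inverse (the (f z))) holomorphic_on ball p r - {p}"
    proof (rule holomorphic_on_inverse)
      show "(\<lambda>z. the (f z)) holomorphic_on ball p r - {p}" using holomorphic_on_subset[OF hol sub2] .
      fix z assume z: "z \<in> ball p r - {p}"
      then obtain v where "f z = Some v" "1 < cmod v" using A True by blast
      then show "the (f z) \<noteq> 0" by auto
    qed
    have eqc: "\<And>x. x \<in> ball p r - {p} \<Longrightarrow> inverse (the (f x)) = local_chart f p x"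
      using sub2 True by (auto simp: local_chart_def split: option.split)
    have h2: "local_chart f p holomorphic_on ball p r - {p}"
      by (rule holomorphic_transform[OF h1 eqc])
    have t1: "((\<lambda>z. inverse (the (f z))) \<longlongrightarrow> 0) (at p)"
      using filterlim_compose[OF tendsto_inverse_0 lim[OF p True]] by (simp add: o_def)
    have ev: "eventually (\<lambda>x. inverse (the (f x)) = local_chart f p x) (at p)"
      unfolding eventually_at using r eqc by (intro exI[of _ r]) (auto simp: dist_commute)
    have t2: "(local_chart f p \<longlongrightarrow> 0) (at p)" using tendsto_cong[OF ev] t1 by blast
    have c0: "local_chart f p p = 0" using True by (simp add: local_chart_def)
    show ?thesis
    proof (rule no_isolated_singularity'[of "{p}"])
      show "\<And>z. z \<in> {p} \<Longrightarrow> (local_chart f p \<longlongrightarrow> local_chart f p z) (at z within ball p r)"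
        using t2 c0 tendsto_within_subset by fastforce
    qed (use h2 in auto)
  qed
  show ?thesis using r sub A H by blast
qed


lemma mult_ge1: "mero_mult f z \<ge> 1"
proof (cases "\<exists>n\<ge>1. (deriv ^^ n) (local_chart f z) z \<noteq> 0")
  case True
  then have "(LEAST n. n \<ge> 1 \<and> (deriv ^^ n) (local_chart f z) z \<noteq> 0) \<ge> 1"
    by (metis (mono_tags, lifting) LeastI)
  then show ?thesis using True by (simp add: mero_mult_def one_enat_def)
next
  case False
  have "mero_mult f z = \<infinity>" unfolding mero_mult_def by (rule if_not_P[OF False])
  then show ?thesis by simp
qed

lemma count_ge_card:
  assumes "finite K" "K \<subseteq> {z\<in>A. f z = w}"
  shows "count_preimages f A w \<ge> enat (card K)"
proof (cases "finite {z\<in>A. f z = w}")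
  case True
  have "enat (card K) = (\<Sum>z\<in>K. (1::enat))" by (simp add: of_nat_eq_enat)
  also have "\<dots> \<le> (\<Sum>z\<in>K. mero_mult f z)" by (rule sum_mono) (rule mult_ge1)
  also have "\<dots> \<le> (\<Sum>z\<in>{z\<in>A. f z = w}. mero_mult f z)"
    by (rule sum_mono2[OF True assms(2)]) simp
  finally show ?thesis using True by (simp add: count_preimages_def)
next
  case False then show ?thesis by (simp add: count_preimages_def)
qed

lemma count_ge_mult:
  assumes "p \<in> A" "f p = w"
  shows "count_preimages f A w \<ge> mero_mult f p"
proof (cases "finite {z\<in>A. f z = w}")
  case True
  have "mero_mult f p \<le> (\<Sum>z\<in>{z\<in>A. f z = w}. mero_mult f z)"
    by (rule member_le_sum) (use assms True in auto)
  then show ?thesis using True by (simp add: count_preimages_def)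
next
  case False then show ?thesis by (simp add: count_preimages_def)
qed

lemma count_union:
  assumes I: "finite I" and disj: "\<And>i j. i \<in> I \<Longrightarrow> j \<in> I \<Longrightarrow> i \<noteq> j \<Longrightarrow> A i \<inter> A j = {}"
    and sub: "\<And>i. i \<in> I \<Longrightarrow> A i \<subseteq> D" and q: "q \<in> D" "\<And>i. i \<in> I \<Longrightarrow> q \<notin> A i" and fq: "f q = w"
  shows "count_preimages f D w \<ge> (\<Sum>i\<in>I. count_preimages f (A i) w) + 1"
proof (cases "finite {z\<in>D. f z = w}")
  case False then show ?thesis by (simp add: count_preimages_def)
next
  case True
  define T where "T i = {z\<in>A i. f z = w}" for i
  have Tsub: "T i \<subseteq> {z\<in>D. f z = w}" if "i \<in> I" for i using sub[OF that] by (auto simp: T_def)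
  have Tfin: "finite (T i)" if "i \<in> I" for i using finite_subset[OF Tsub[OF that] True] .
  have ci: "count_preimages f (A i) w = (\<Sum>z\<in>T i. mero_mult f z)" if "i \<in> I" for i
    using Tfin[OF that] by (simp add: count_preimages_def T_def)
  have "(\<Sum>i\<in>I. count_preimages f (A i) w) = (\<Sum>i\<in>I. \<Sum>z\<in>T i. mero_mult f z)"
    using ci by simp
  also have "\<dots> = (\<Sum>z\<in>(\<Union>i\<in>I. T i). mero_mult f z)"
    by (rule sum.UNION_disjoint[symmetric]) (use I Tfin disj in \<open>auto simp: T_def\<close>)
  finally have e1: "(\<Sum>i\<in>I. count_preimages f (A i) w) = (\<Sum>z\<in>(\<Union>i\<in>I. T i). mero_mult f z)" .
  have qn: "q \<notin> (\<Union>i\<in>I. T i)" using q by (auto simp: T_def)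
  have fU: "finite (\<Union>i\<in>I. T i)" using I Tfin by auto
  have "(\<Sum>z\<in>(\<Union>i\<in>I. T i). mero_mult f z) + 1 \<le> (\<Sum>z\<in>(\<Union>i\<in>I. T i). mero_mult f z) + mero_mult f q"
    by (intro add_left_mono mult_ge1)
  also have "\<dots> = (\<Sum>z\<in>insert q (\<Union>i\<in>I. T i). mero_mult f z)"
    using qn fU by (simp add: add.commute)
  also have "\<dots> \<le> (\<Sum>z\<in>{z\<in>D. f z = w}. mero_mult f z)"
    by (rule sum_mono2[OF True]) (use Tsub q fq in auto)
  finally show ?thesis using e1 True by (simp add: count_preimages_def)
qed


lemma mult_enat:
  assumes "mero_mult f p = enat k"
  shows "k \<ge> 1 \<and> (deriv^^k) (local_chart f p) p \<noteq> 0 \<and> (\<forall>i. 0<i \<and> i<k \<longrightarrow> (deriv^^i) (local_chart f p) p = 0)"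
proof -
  let ?P = "\<lambda>n. n \<ge> 1 \<and> (deriv ^^ n) (local_chart f p) p \<noteq> 0"
  have ex: "\<exists>n. ?P n"
  proof (rule ccontr)
    assume "\<not> (\<exists>n. ?P n)"
    then have "\<not> (\<exists>n\<ge>1. (deriv ^^ n) (local_chart f p) p \<noteq> 0)" by blast
    then have "mero_mult f p = \<infinity>" unfolding mero_mult_def by (rule if_not_P)
    then show False using assms by simp
  qed
  then have "(\<exists>n\<ge>1. (deriv ^^ n) (local_chart f p) p \<noteq> 0)" by blast
  then have "mero_mult f p = enat (LEAST n. ?P n)" unfolding mero_mult_def by (rule if_P)
  then have k: "k = (LEAST n. ?P n)" using assms by simp
  have "?P k" unfolding k by (rule LeastI_ex[OF ex])
  moreover have "\<forall>i. 0<i \<and> i<k \<longrightarrow> (deriv^^i) (local_chart f p) p = 0"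
    using not_less_Least[of _ ?P] unfolding k[symmetric] by force
  ultimately show ?thesis by blast
qed

lemma chart_inv:
  assumes mf: "meromorphic_sphere f G"
    and gb: "\<forall>x\<in>ball p r. x \<noteq> p \<longrightarrow> (\<exists>v. f x = Some v \<and> (f p = None \<longrightarrow> 1 < cmod v))"
    and x: "x \<in> ball p r" and nw: "near (f p) e w" and eq: "cv (f p) (f x) = cv (f p) w"
  shows "f x = w"
proof (cases "f p")
  case None
  show ?thesis
  proof (cases "x = p")
    case True
    then show ?thesis using nw eq None by (auto simp: near_def cv_def)
  next
    case False
    then obtain v where v: "f x = Some v" "1 < cmod v" using gb x None by blast
    then have "v \<noteq> 0" by auto
    then show ?thesis using nw eq None v by (auto simp: near_def cv_def)
  qed
next
  case (Some b)
  have "\<exists>v. f x = Some v"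
    using gb x Some by (cases "x = p") auto
  then obtain v where v: "f x = Some v" by blast
  then show ?thesis using nw eq Some by (auto simp: near_def cv_def)
qed

lemma lemmaA:
  assumes mf: "meromorphic_sphere f G" and p: "p \<in> G" and mk: "mero_mult f p = enat k" and R: "R > 0"
  shows "\<exists>r e. 0 < r \<and> r \<le> R \<and> 0 < e \<and> (\<forall>w. near (f p) e w \<longrightarrow> count_preimages f (ball p r) w \<ge> enat k)"
proof -
  obtain r0 where r0: "r0 > 0" "ball p r0 \<subseteq> G"
    and gb: "\<forall>x\<in>ball p r0. x \<noteq> p \<longrightarrow> (\<exists>v. f x = Some v \<and> (f p = None \<longrightarrow> 1 < cmod v))"
    and hol: "local_chart f p holomorphic_on ball p r0"
    using good_ball[OF mf p] by blast
  define \<phi> where "\<phi> = local_chart f p"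
  have kk: "k \<ge> 1" "(deriv^^k) \<phi> p \<noteq> 0" "\<And>i. 0<i \<Longrightarrow> i<k \<Longrightarrow> (deriv^^i) \<phi> p = 0"
    using mult_enat[OF mk] by (auto simp: \<phi>_def)
  obtain g r1 where r1: "0 < r1" and holg: "g holomorphic_on ball p r1"
    and fac: "\<And>w. w \<in> ball p r1 \<Longrightarrow> \<phi> w - \<phi> p = ((w - p) * g w) ^ k"
    and gnz: "\<And>w. w \<in> ball p r1 \<Longrightarrow> g w \<noteq> 0"
    by (rule holomorphic_factor_order_of_zero_strong[of \<phi> "ball p r0" p k])
       (use hol r0 kk in \<open>auto simp: \<phi>_def\<close>)
  define h where "h w = (w - p) * g w" for w
  have holh: "h holomorphic_on ball p r1" unfolding h_def by (intro holomorphic_intros holg)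
  have gd: "(g has_field_derivative deriv g p) (at p)"
    using holg r1 by (meson centre_in_ball holomorphic_derivI open_ball)
  have "(h has_field_derivative g p) (at p)"
    unfolding h_def by (rule derivative_eq_intros gd refl)+ simp
  then have dh: "deriv h p = g p" by (simp add: DERIV_imp_deriv)
  have "deriv h p \<noteq> 0" using dh gnz r1 by simp
  then obtain r2 where r2: "r2 > 0" "ball p r2 \<subseteq> ball p r1" "inj_on h (ball p r2)"
    using has_complex_derivative_locally_injective[OF holh _ _ ] r1 by (metis centre_in_ball open_ball)
  define r where "r = min r2 (min R r0)"
  have r: "r > 0" "r \<le> R" "ball p r \<subseteq> ball p r2" "ball p r \<subseteq> ball p r0" "ball p r \<subseteq> ball p r1"
    using r2 R r0 by (auto simp: r_def)
  have injr: "inj_on h (ball p r)" using inj_on_subset[OF r2(3) r(3)] .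
  have "open (h ` ball p r)"
    by (rule open_mapping_thm3) (use holomorphic_on_subset[OF holh r(5)] injr in auto)
  moreover have "0 \<in> h ` ball p r" using r by (auto simp: h_def intro!: image_eqI[of _ _ p])
  ultimately obtain \<eta> where \<eta>: "\<eta> > 0" "ball 0 \<eta> \<subseteq> h ` ball p r" using openE by blast
  define e where "e = \<eta> ^ k"
  have e: "e > 0" using \<eta> by (simp add: e_def)
  have main: "count_preimages f (ball p r) w \<ge> enat k" if nw: "near (f p) e w" for w
  proof -
    define a where "a = cv (f p) w - \<phi> p"
    have phip: "\<phi> p = cv (f p) (f p)" by (simp add: \<phi>_def local_chart_cv)
    have asm: "cmod a < e \<and> (a = 0 \<longrightarrow> w = f p)"
    proof (cases "f p")
      case None
      then show ?thesis using nw phip e by (auto simp: near_def cv_def a_def)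
    next
      case (Some b)
      then show ?thesis using nw phip by (auto simp: near_def cv_def a_def)
    qed
    show ?thesis
    proof (cases "a = 0")
      case True
      then have "w = f p" using asm by blast
      then have "count_preimages f (ball p r) w \<ge> mero_mult f p"
        using r by (intro count_ge_mult) auto
      then show ?thesis using mk by simp
    next
      case False
      define K0 where "K0 = {u::complex. u ^ k = a}"
      have cK0: "card K0 = k" unfolding K0_def using card_nth_roots[OF False] kk by simp
      have fK0: "finite K0" unfolding K0_def using kk by auto
      have K0sub: "K0 \<subseteq> h ` ball p r"
      proof
        fix u assume "u \<in> K0"
        then have "cmod u ^ k = cmod a" by (simp add: K0_def norm_power[symmetric])
        then have "cmod u ^ k < \<eta> ^ k" using asm by (simp add: e_def)
        then have "cmod u < \<eta>" using \<eta> by (meson less_le_not_le power_less_imp_less_base)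
        then show "u \<in> h ` ball p r" using \<eta> by auto
      qed
      define K where "K = inv_into (ball p r) h ` K0"
      have injK: "inj_on (inv_into (ball p r) h) K0"
        using K0sub by (meson inj_on_inv_into)
      have cK: "card K = k" unfolding K_def using card_image[OF injK] cK0 by simp
      have fK: "finite K" unfolding K_def using fK0 by simp
      have Ksub: "K \<subseteq> {z\<in>ball p r. f z = w}"
      proof
        fix z assume "z \<in> K"
        then obtain u where u: "u \<in> K0" "z = inv_into (ball p r) h u" unfolding K_def by blast
        have uin: "u \<in> h ` ball p r" using u K0sub by blast
        have zb: "z \<in> ball p r" unfolding u(2) by (rule inv_into_into[OF uin])
        have hz: "h z = u" unfolding u(2) by (rule f_inv_into_f[OF uin])
        have "\<phi> z - \<phi> p = a" using fac[of z] zb r hz u by (auto simp: h_def K0_def)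
        then have "cv (f p) (f z) = cv (f p) w" by (simp add: a_def \<phi>_def local_chart_cv)
        then have "f z = w" using chart_inv[OF mf gb _ nw] zb r by blast
        then show "z \<in> {z\<in>ball p r. f z = w}" using zb by blast
      qed
      show ?thesis using count_ge_card[OF fK Ksub] cK by simp
    qed
  qed
  show ?thesis using r e main by blast
qed


lemma near_mono: "near w0 e w \<Longrightarrow> e \<le> e' \<Longrightarrow> near w0 e' w"
  by (cases w0) (auto simp: near_def)

lemma key:
  assumes mf: "meromorphic_sphere f G" and DG: "D \<subseteq> G" and oD: "open D" and z0: "z0 \<notin> D"
    and cnt: "count_preimages f D w0 = enat n"
  shows "\<exists>e>0. \<exists>\<rho>>0. \<forall>q\<in>D. dist q z0 < \<rho> \<longrightarrow> near w0 e (f q) \<longrightarrow> count_preimages f D (f q) \<ge> enat n + 1"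
proof -
  define P where "P = {z\<in>D. f z = w0}"
  have fP: "finite P" using cnt by (auto simp: count_preimages_def P_def split: if_splits)
  have sumP: "(\<Sum>p\<in>P. mero_mult f p) = enat n" using cnt fP by (simp add: count_preimages_def P_def)
  have mfin: "\<exists>k. mero_mult f p = enat k" if "p \<in> P" for p
  proof -
    have "mero_mult f p \<le> enat n" using member_le_sum[of p P "mero_mult f"] that fP sumP by simp
    then show ?thesis by (meson enat_ile)
  qed
  then obtain k where k: "\<And>p. p \<in> P \<Longrightarrow> mero_mult f p = enat (k p)" by metis
  define DS where "DS = insert 1 ((\<lambda>p. dist p z0) ` P \<union> (\<lambda>(p,p'). dist p p') ` {(p,p'). p \<in> P \<and> p' \<in> P \<and> p \<noteq> p'})"
  have "finite {(p,p'). p \<in> P \<and> p' \<in> P \<and> p \<noteq> p'}"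
    by (rule finite_subset[of _ "P \<times> P"]) (use fP in auto)
  then have fDS: "finite DS" unfolding DS_def using fP by simp
  have DSpos: "\<forall>x\<in>DS. x > 0" unfolding DS_def using z0 by (auto simp: P_def)
  define d0 where "d0 = Min DS / 3"
  have DSne: "DS \<noteq> {}" by (simp add: DS_def)
  have d0: "d0 > 0" unfolding d0_def using DSpos Min_in[OF fDS DSne] by simp
  have d0a: "3 * d0 \<le> dist p z0" if "p \<in> P" for p
  proof -
    have "dist p z0 \<in> DS" using that by (simp add: DS_def)
    then show ?thesis unfolding d0_def using Min_le[OF fDS] by simp
  qed
  have d0b: "3 * d0 \<le> dist p p'" if "p \<in> P" "p' \<in> P" "p \<noteq> p'" for p p'
  proof -
    have "(p,p') \<in> {(p,p'). p \<in> P \<and> p' \<in> P \<and> p \<noteq> p'}" using that by simp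
    then have "dist p p' \<in> DS" unfolding DS_def by (metis (no_types, lifting) UnI2 case_prod_conv image_eqI insertI2)
    then show ?thesis unfolding d0_def using Min_le[OF fDS] by simp
  qed
  have "\<forall>p\<in>P. \<exists>s>0. ball p s \<subseteq> D"
  proof
    fix p assume "p \<in> P" then have "p \<in> D" by (simp add: P_def)
    then show "\<exists>s>0. ball p s \<subseteq> D" using oD unfolding open_contains_ball by blast
  qed
  from bchoice[OF this] obtain s where s0: "\<forall>p\<in>P. s p > 0 \<and> ball p (s p) \<subseteq> D" ..
  have s: "\<And>p. p \<in> P \<Longrightarrow> s p > 0 \<and> ball p (s p) \<subseteq> D" using s0 by blast
  have H: "\<forall>p\<in>P. \<exists>r e. 0 < r \<and> r \<le> min d0 (s p) \<and> 0 < e \<and> (\<forall>w. near (f p) e w \<longrightarrow> count_preimages f (ball p r) w \<ge> enat (k p))"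
  proof
    fix p assume pP: "p \<in> P"
    show "\<exists>r e. 0 < r \<and> r \<le> min d0 (s p) \<and> 0 < e \<and> (\<forall>w. near (f p) e w \<longrightarrow> count_preimages f (ball p r) w \<ge> enat (k p))"
    proof (rule lemmaA[OF mf _ k[OF pP]])
      show "p \<in> G" using pP DG by (auto simp: P_def)
      show "0 < min d0 (s p)" using d0 s[OF pP] by simp
    qed
  qed
  from bchoice[OF H] obtain r where H2: "\<forall>p\<in>P. \<exists>e. 0 < r p \<and> r p \<le> min d0 (s p) \<and> 0 < e \<and> (\<forall>w. near (f p) e w \<longrightarrow> count_preimages f (ball p (r p)) w \<ge> enat (k p))"
    ..
  from bchoice[OF H2] obtain e where re0: "\<forall>p\<in>P. 0 < r p \<and> r p \<le> min d0 (s p) \<and> 0 < e p \<and> (\<forall>w. near (f p) (e p) w \<longrightarrow> count_preimages f (ball p (r p)) w \<ge> enat (k p))"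
    ..
  have re: "\<And>p. p \<in> P \<Longrightarrow> 0 < r p \<and> r p \<le> min d0 (s p) \<and> 0 < e p \<and> (\<forall>w. near (f p) (e p) w \<longrightarrow> count_preimages f (ball p (r p)) w \<ge> enat (k p))"
    using re0 by blast
  define E where "E = Min (insert 1 (e ` P))"
  have E: "E > 0" unfolding E_def using fP re by auto
  have Ele: "E \<le> e p" if "p \<in> P" for p unfolding E_def using fP that by auto
  show ?thesis
  proof (intro exI conjI ballI impI)
    show "E > 0" by (rule E)
    show "d0 > 0" by (rule d0)
    fix q assume q: "q \<in> D" "dist q z0 < d0" and nq: "near w0 E (f q)"
    have disj: "ball i (r i) \<inter> ball j (r j) = {}" if "i \<in> P" "j \<in> P" "i \<noteq> j" for i j
    proof -
      have "r i + r j \<le> dist i j" using re[OF that(1)] re[OF that(2)] d0b[OF that] by linarith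
      then show ?thesis by (simp add: disjoint_ballI)
    qed
    have subD: "ball i (r i) \<subseteq> D" if "i \<in> P" for i using re[OF that] s[OF that] by (meson min.boundedE order_trans subset_ball)
    have qn: "q \<notin> ball i (r i)" if "i \<in> P" for i
    proof
      assume "q \<in> ball i (r i)"
      then have "dist i q < d0" using re[OF that] by (simp add: dist_commute)
      then have "dist i z0 < 2 * d0" using q(2) dist_triangle[of i z0 q] by linarith
      then show False using d0a[OF that] d0 by linarith
    qed
    have "count_preimages f D (f q) \<ge> (\<Sum>i\<in>P. count_preimages f (ball i (r i)) (f q)) + 1"
      by (rule count_union[OF fP disj subD q(1) qn]) auto
    moreover have "(\<Sum>i\<in>P. count_preimages f (ball i (r i)) (f q)) \<ge> (\<Sum>i\<in>P. enat (k i))"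
    proof (rule sum_mono)
      fix i assume i: "i \<in> P"
      have "near (f i) (e i) (f q)" using near_mono[OF nq Ele[OF i]] i by (simp add: P_def)
      then show "count_preimages f (ball i (r i)) (f q) \<ge> enat (k i)" using re[OF i] by blast
    qed
    moreover have "(\<Sum>i\<in>P. enat (k i)) = enat n" using sumP k by simp
    ultimately show "count_preimages f D (f q) \<ge> enat n + 1"
      by (metis add_right_mono order_trans)
  qed
qed


lemma nearC:
  assumes mf: "meromorphic_sphere f G" and z0: "z0 \<in> G" and e: "e > 0"
  shows "eventually (\<lambda>q. near (f z0) e (f q)) (at z0)"
proof -
  obtain r where r: "r > 0" "ball z0 r \<subseteq> G"
    and gb: "\<forall>x\<in>ball z0 r. x \<noteq> z0 \<longrightarrow> (\<exists>v. f x = Some v \<and> (f z0 = None \<longrightarrow> 1 < cmod v))"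
    and hol: "local_chart f z0 holomorphic_on ball z0 r"
    using good_ball[OF mf z0] by blast
  define \<phi> where "\<phi> = local_chart f z0"
  have "continuous_on (ball z0 r) \<phi>" using hol holomorphic_on_imp_continuous_on by (simp add: \<phi>_def)
  then have "isCont \<phi> z0" using r continuous_on_eq_continuous_at[of "ball z0 r" \<phi>] by simp
  then have "(\<phi> \<longlongrightarrow> \<phi> z0) (at z0)" by (simp add: isCont_def)
  then have ev1: "eventually (\<lambda>q. dist (\<phi> q) (\<phi> z0) < e) (at z0)" using e by (rule tendstoD)
  have ev2: "eventually (\<lambda>q. q \<in> ball z0 r) (at z0)" unfolding eventually_at using r by (intro exI[of _ r]) (auto simp: dist_commute)
  obtain d where d: "d > 0" "\<And>q. q \<noteq> z0 \<Longrightarrow> dist q z0 < d \<Longrightarrow> dist (\<phi> q) (\<phi> z0) < e \<and> q \<in> ball z0 r"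
    using eventually_conj[OF ev1 ev2] unfolding eventually_at by blast
  show ?thesis unfolding eventually_at
  proof (intro exI[of _ d] conjI ballI impI)
    show "d > 0" by (rule d)
    fix q assume qq: "q \<noteq> z0 \<and> dist q z0 < d"
    then have q: "q \<noteq> z0" and h: "dist (\<phi> q) (\<phi> z0) < e \<and> q \<in> ball z0 r" using d by auto
    obtain v where v: "f q = Some v" "f z0 = None \<longrightarrow> 1 < cmod v" using gb h q by blast
    show "near (f z0) e (f q)"
    proof (cases "f z0")
      case None
      then have "\<phi> q = inverse v" "\<phi> z0 = 0" using v by (auto simp: \<phi>_def local_chart_def)
      then show ?thesis using h None v by (auto simp: near_def dist_norm)
    next
      case (Some b)
      then have "\<phi> q = v" "\<phi> z0 = b" using v by (auto simp: \<phi>_def local_chart_def)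
      then show ?thesis using h Some v by (auto simp: near_def dist_norm)
    qed
  qed
qed


lemma hvd_Un:
  assumes "(f has_vector_derivative v) (at x within S)" "(f has_vector_derivative v) (at x within T)"
  shows "(f has_vector_derivative v) (at x within S \<union> T)"
proof -
  have a: "bounded_linear (\<lambda>h. h *\<^sub>R v)" by (rule bounded_linear_scaleR_left)
  show ?thesis
    using assms unfolding has_vector_derivative_def has_derivative_within
    using Lim_within_Un by blast
qed

lemma frac_cell:
  fixes k :: int
  assumes "x \<in> {real_of_int k..real_of_int k + 1}" "H 0 = H 1"
  shows "H (frac x) = H (x - k)"
proof (cases "x = k + 1")
  case True
  then have "frac x = 0" by (simp add: frac_def)
  then show ?thesis using True assms by simp
next
  case False
  then have "floor x = k" using assms by (intro floor_unique) auto
  then show ?thesis by (simp add: frac_def)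
qed

lemma periodic_ext:
  fixes \<gamma> \<gamma>' :: "real \<Rightarrow> complex"
  assumes cl: "\<gamma> 0 = \<gamma> 1"
    and der: "\<forall>t\<in>{0..1}. (\<gamma> has_vector_derivative \<gamma>' t) (at t within {0..1})"
    and cd: "continuous_on {0..1} \<gamma>'" and e: "\<gamma>' 0 = \<gamma>' 1"
  shows "((\<lambda>t. \<gamma> (frac t)) has_vector_derivative \<gamma>' (frac t)) (at t)"
    and "isCont (\<lambda>t. \<gamma>' (frac t)) t"
proof -
  let ?p = "\<lambda>t. \<gamma> (frac t)" and ?q = "\<lambda>t. \<gamma>' (frac t)"
  have cellD: "(?p has_vector_derivative ?q x) (at x within {real_of_int k..real_of_int k+1})"
    if x: "x \<in> {real_of_int k..real_of_int k+1}" for x k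
  proof -
    have "((\<lambda>x. x - real_of_int k) has_vector_derivative 1) (at x within {real_of_int k..real_of_int k+1})"
      by (auto intro!: derivative_eq_intros)
    moreover have im: "(\<lambda>x. x - real_of_int k) ` {real_of_int k..real_of_int k+1} = {0..1}"
    proof -
      have "(\<lambda>x. x - real_of_int k) ` {real_of_int k..real_of_int k+1} = {real_of_int k - real_of_int k..real_of_int k + 1 - real_of_int k}"
        by (rule image_minus_const_atLeastAtMost')
      then show ?thesis by simp
    qed
    moreover have "(\<gamma> has_vector_derivative \<gamma>' (x - k)) (at (x - k) within {0..1})"
      using der x by auto
    ultimately have "((\<gamma> \<circ> (\<lambda>x. x - real_of_int k)) has_vector_derivative (1 *\<^sub>R \<gamma>' (x - k))) (at x within {real_of_int k..real_of_int k+1})"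
      by (intro vector_diff_chain_within) auto
    then have "((\<lambda>x. \<gamma> (x - k)) has_vector_derivative \<gamma>' (x - k)) (at x within {real_of_int k..real_of_int k+1})"
      by (simp add: o_def)
    moreover have eqs: "\<And>y. y \<in> {real_of_int k..real_of_int k+1} \<Longrightarrow> ?p y = \<gamma> (y - k)"
      using frac_cell cl by blast
    ultimately have "(?p has_vector_derivative \<gamma>' (x - k)) (at x within {real_of_int k..real_of_int k+1})"
      using has_vector_derivative_transform[where g="?p" and f="\<lambda>y. \<gamma> (y - k)", OF x eqs] by blast
    then show ?thesis using frac_cell[OF x, of \<gamma>'] e by simp
  qed
  have cellC: "continuous_on {real_of_int k..real_of_int k+1} ?q" for k
  proof -
    have "continuous_on {real_of_int k..real_of_int k+1} (\<lambda>x. \<gamma>' (x - k))"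
    proof (rule continuous_on_compose2[OF cd])
      show "continuous_on {real_of_int k..real_of_int k+1} (\<lambda>x. x - real_of_int k)" by (intro continuous_intros)
    qed auto
    then show ?thesis
      by (rule continuous_on_eq) (metis frac_cell e)
  qed
  define k where "k = floor t"
  have fl: "real_of_int k \<le> t" "t < real_of_int k + 1" using k_def by linarith+
  have tk: "t \<in> {real_of_int k - 1 <..< real_of_int k + 1}" using fl by simp
  have U: "{real_of_int (k-1)..real_of_int (k-1)+1} \<union> {real_of_int k..real_of_int k+1} = {real_of_int k - 1..real_of_int k + 1}"
    by auto
  have int: "t \<in> interior {real_of_int k - 1..real_of_int k + 1}" using tk by simp
  show "(?p has_vector_derivative ?q t) (at t)"
  proof (cases "t = k")
    case True
    have "(?p has_vector_derivative ?q t) (at t within {real_of_int (k-1)..real_of_int (k-1)+1} \<union> {real_of_int k..real_of_int k+1})"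
      by (rule hvd_Un; rule cellD) (use True in auto)
    then show ?thesis unfolding U using at_within_interior[OF int] by simp
  next
    case False
    then have "t \<in> interior {real_of_int k..real_of_int k+1}" using fl by simp
    moreover have "(?p has_vector_derivative ?q t) (at t within {real_of_int k..real_of_int k+1})"
      by (rule cellD) (use fl in simp)
    ultimately show ?thesis using at_within_interior by metis
  qed
  have "continuous_on ({real_of_int (k-1)..real_of_int (k-1)+1} \<union> {real_of_int k..real_of_int k+1}) ?q"
    by (rule continuous_on_closed_Un) (use cellC[of "k-1"] cellC[of k] in auto)
  then have "continuous_on {real_of_int k - 1..real_of_int k + 1} ?q" unfolding U .
  then show "isCont ?q t" using continuous_on_interior[OF _ int] by blast
qed


locale curvepar =
  fixes p q :: "real \<Rightarrow> complex"
  assumes dp: "\<And>t. (p has_vector_derivative q t) (at t)"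
    and cq: "\<And>t. isCont q t"
    and nz: "\<And>t. q t \<noteq> 0"
    and perI: "\<And>t (k::int). p (t + k) = p t"
    and injp: "\<And>s t. p s = p t \<Longrightarrow> \<exists>k::int. t = s + k"
begin

lemma cp: "continuous_on UNIV p"
  using dp has_vector_derivative_continuous continuous_at_imp_continuous_on by blast

lemma cqo: "continuous_on A q"
  using cq continuous_at_imp_continuous_on by blast

lemma minq: "\<exists>m>0. \<forall>t\<in>{T0-2..T0+2}. m \<le> cmod (q t)"
proof -
  have "continuous_on {T0-2..T0+2} (\<lambda>t. cmod (q t))" by (intro continuous_intros cqo)
  then obtain t0 where "t0 \<in> {T0-2..T0+2}" "\<forall>y\<in>{T0-2..T0+2}. cmod (q t0) \<le> cmod (q y)"
    using continuous_attains_inf[of "{T0-2..T0+2}"] by force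
  then show ?thesis using nz[of t0] by (intro exI[of _ "cmod (q t0)"]) auto
qed

lemma est:
  assumes e: "\<epsilon> > 0"
  shows "\<exists>\<eta>>0. \<eta> \<le> 1/4 \<and> (\<forall>s t. s \<in> {T0-1..T0+1} \<and> \<bar>t-s\<bar> \<le> \<eta> \<longrightarrow> cmod (p t - p s - of_real (t-s) * q s) \<le> \<epsilon> * \<bar>t-s\<bar>)"
proof -
  have "uniformly_continuous_on {T0-2..T0+2} q" by (intro compact_uniformly_continuous cqo) simp
  then obtain d0 where d0: "d0 > 0" "\<And>x x'. x \<in> {T0-2..T0+2} \<Longrightarrow> x' \<in> {T0-2..T0+2} \<Longrightarrow> dist x' x < d0 \<Longrightarrow> dist (q x') (q x) < \<epsilon>"
    unfolding uniformly_continuous_on_def using e by metis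
  define \<eta> where "\<eta> = min (d0/2) (1/4)"
  have \<eta>: "\<eta> > 0" "\<eta> \<le> 1/4" "\<eta> < d0" using d0 by (auto simp: \<eta>_def)
  have main: "cmod (p t - p s - of_real (t-s) * q s) \<le> \<epsilon> * \<bar>t-s\<bar>"
    if s: "s \<in> {T0-1..T0+1}" and ts: "\<bar>t-s\<bar> \<le> \<eta>" for s t
  proof -
    have segK: "closed_segment s t \<subseteq> {T0-2..T0+2}" using s ts \<eta> by (auto simp: closed_segment_eq_real_ivl)
    have "norm (p t - p s - (t - s) *\<^sub>R q s) \<le> norm (t - s) * \<epsilon>"
    proof (rule vector_differentiable_bound_linearization[of "closed_segment s t" p q])
      show "\<And>x. x \<in> closed_segment s t \<Longrightarrow> (p has_vector_derivative q x) (at x within closed_segment s t)"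
        using dp has_vector_derivative_at_within by blast
      show "closed_segment s t \<subseteq> closed_segment s t" by simp
      show "s \<in> closed_segment s t" by simp
      fix x assume x: "x \<in> closed_segment s t"
      have "norm (x - s) \<le> norm (t - s)" by (rule segment_bound1[OF x])
      then have "dist x s < d0" using ts \<eta> by (simp add: dist_norm)
      then have "dist (q x) (q s) < \<epsilon>" using d0(2)[of s x] segK x s by auto
      then show "norm (q x - q s) \<le> \<epsilon>" by (simp add: dist_norm)
    qed
    then show ?thesis by (simp add: scaleR_conv_of_real mult.commute)
  qed
  show ?thesis using \<eta> main by blast
qed

lemma far:
  assumes \<eta>: "\<eta> > 0" "\<eta> \<le> 1/2"
  shows "\<exists>d>0. \<forall>s\<in>{T0-1..T0+1}. \<forall>t. \<eta> \<le> \<bar>t - s\<bar> \<and> \<bar>t - s\<bar> \<le> 1/2 \<longrightarrow> d \<le> cmod (p t - p s)"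
proof -
  define C where "C = {T0-1..T0+1} \<times> ({-1/2..-\<eta>} \<union> {\<eta>..1/2})"
  have cC: "compact C" unfolding C_def by (intro compact_Times compact_Un) auto
  have neC: "C \<noteq> {}" using \<eta> by (auto simp: C_def)
  have "continuous_on C (\<lambda>x. cmod (p (fst x + snd x) - p (fst x)))"
    by (intro continuous_intros continuous_on_compose2[OF cp]) auto
  then obtain x0 where x0: "x0 \<in> C" "\<forall>y\<in>C. cmod (p (fst x0 + snd x0) - p (fst x0)) \<le> cmod (p (fst y + snd y) - p (fst y))"
    using continuous_attains_inf[OF cC neC] by blast
  define d where "d = cmod (p (fst x0 + snd x0) - p (fst x0))"
  have "d > 0"
  proof (rule ccontr)
    assume "\<not> d > 0"
    then have "p (fst x0) = p (fst x0 + snd x0)" by (simp add: d_def)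
    then obtain k :: int where k: "fst x0 + snd x0 = fst x0 + k" using injp by blast
    have "snd x0 \<in> {-1/2..-\<eta>} \<union> {\<eta>..1/2}" using x0(1) by (auto simp: C_def mem_Times_iff)
    then have "\<eta> \<le> \<bar>snd x0\<bar>" "\<bar>snd x0\<bar> \<le> 1/2" using \<eta> by auto
    then have A: "\<eta> \<le> \<bar>real_of_int k\<bar>" "\<bar>real_of_int k\<bar> \<le> 1/2" using k by auto
    have "k = 0 \<or> 1 \<le> \<bar>real_of_int k\<bar>"
    proof (cases "k = 0")
      case False
      then have "1 \<le> \<bar>k\<bar>" by linarith
      then have "(1::real) \<le> real_of_int \<bar>k\<bar>" by linarith
      then show ?thesis by simp
    qed simp
    then show False
    proof
      assume "k = 0" then show False using A \<eta> by simp
    next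
      assume "1 \<le> \<bar>real_of_int k\<bar>" then show False using A by linarith
    qed
  qed
  moreover have "\<forall>s\<in>{T0-1..T0+1}. \<forall>t. \<eta> \<le> \<bar>t - s\<bar> \<and> \<bar>t - s\<bar> \<le> 1/2 \<longrightarrow> d \<le> cmod (p t - p s)"
  proof (intro ballI allI impI)
    fix s t assume s: "s \<in> {T0-1..T0+1}" and t: "\<eta> \<le> \<bar>t - s\<bar> \<and> \<bar>t - s\<bar> \<le> 1/2"
    have "(s, t - s) \<in> C" using s t by (auto simp: C_def)
    then show "d \<le> cmod (p t - p s)" using x0(2) by (force simp: d_def)
  qed
  ultimately show ?thesis by blast
qed

lemma rep:
  assumes "z \<in> range p"
  shows "\<exists>t. z = p t \<and> \<bar>t - s\<bar> \<le> 1/2"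
proof -
  obtain t' where z: "z = p t'" using assms by blast
  define k where "k = \<lceil>s - t' - 1/2\<rceil>"
  have "s - t' - 1/2 \<le> k" "k < s - t' + 1/2" unfolding k_def by linarith+
  then have "\<bar>(t' + k) - s\<bar> \<le> 1/2" by linarith
  moreover have "z = p (t' + k)" using z perI by simp
  ultimately show ?thesis by blast
qed

definition nv :: "real \<Rightarrow> complex" where "nv s = \<i> * q s / of_real (cmod (q s))"

lemma nv_norm: "cmod (nv s) = 1"
  using nz[of s] by (simp add: nv_def norm_mult norm_divide)

lemma tangent_Re: "Re (of_real a * q s * cnj (nv s)) = 0"
proof -
  have "of_real a * q s * cnj (nv s) = of_real a * (q s * cnj (q s)) * (- \<i>) / of_real (cmod (q s))"
    by (simp add: nv_def)
  also have "\<dots> = of_real a * of_real ((cmod (q s))\<^sup>2) * (- \<i>) / of_real (cmod (q s))"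
    by (simp only: complex_norm_square)
  also have "\<dots> = of_real (a * (cmod (q s))\<^sup>2 / cmod (q s)) * (- \<i>)"
    by simp
  finally show ?thesis by simp
qed


end


context curvepar
begin

lemma avoid:
  assumes m: "m > 0" "\<forall>t\<in>{T0-2..T0+2}. m \<le> cmod (q t)" and \<kappa>: "0 < \<kappa>" "\<kappa> \<le> 1"
  shows "\<exists>\<delta> \<eta>. \<delta> > 0 \<and> \<eta> > 0 \<and> \<eta> \<le> 1/4 \<and> \<delta> \<le> m * \<eta> / 2
     \<and> (\<forall>s t. s \<in> {T0-1..T0+1} \<and> \<bar>t-s\<bar> \<le> \<eta> \<longrightarrow> cmod (p t - p s - of_real (t-s) * q s) \<le> (\<kappa> * m / 4) * \<bar>t-s\<bar>)
     \<and> (\<forall>s\<in>{T0-1..T0+1}. \<forall>x\<in>range p. cmod (x - p s) < \<delta> \<longrightarrow> (\<exists>t. x = p t \<and> \<bar>t - s\<bar> < \<eta>))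
     \<and> (\<forall>s\<in>{T0-1..T0+1}. \<forall>x\<in>range p. 0 < cmod (x - p s) \<and> cmod (x - p s) < \<delta> \<longrightarrow> \<bar>Re ((x - p s) * cnj (nv s))\<bar> < \<kappa> * cmod (x - p s))"
proof -
  define \<epsilon> where "\<epsilon> = \<kappa> * m / 4"
  have \<epsilon>: "\<epsilon> > 0" using m \<kappa> by (simp add: \<epsilon>_def)
  obtain \<eta> where \<eta>: "\<eta> > 0" "\<eta> \<le> 1/4"
    and E: "\<forall>s t. s \<in> {T0-1..T0+1} \<and> \<bar>t-s\<bar> \<le> \<eta> \<longrightarrow> cmod (p t - p s - of_real (t-s) * q s) \<le> \<epsilon> * \<bar>t-s\<bar>"
    using est[of \<epsilon> T0] \<epsilon> by blast
  obtain d where d: "d > 0" and F: "\<forall>s\<in>{T0-1..T0+1}. \<forall>t. \<eta> \<le> \<bar>t - s\<bar> \<and> \<bar>t - s\<bar> \<le> 1/2 \<longrightarrow> d \<le> cmod (p t - p s)"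
    using far[of \<eta> T0] \<eta> by auto
  define \<delta> where "\<delta> = min d (m * \<eta> / 2)"
  have \<delta>: "\<delta> > 0" "\<delta> \<le> d" "\<delta> \<le> m * \<eta> / 2" using d m \<eta> by (auto simp: \<delta>_def)
  have P: "\<exists>t. x = p t \<and> \<bar>t - s\<bar> < \<eta>" if s: "s \<in> {T0-1..T0+1}" and x: "x \<in> range p" and xd: "cmod (x - p s) < \<delta>" for s x
  proof -
    obtain t where t: "x = p t" "\<bar>t - s\<bar> \<le> 1/2" using rep[OF x] by blast
    have "\<bar>t - s\<bar> < \<eta>"
    proof (rule ccontr)
      assume "\<not> \<bar>t - s\<bar> < \<eta>"
      then have "d \<le> cmod (p t - p s)" using F s t by auto
      then show False using xd t \<delta> by simp
    qed
    then show ?thesis using t by blast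
  qed
  have C: "\<bar>Re ((x - p s) * cnj (nv s))\<bar> < \<kappa> * cmod (x - p s)"
    if s: "s \<in> {T0-1..T0+1}" and x: "x \<in> range p" and xd: "0 < cmod (x - p s)" "cmod (x - p s) < \<delta>" for s x
  proof -
    obtain t where t: "x = p t" "\<bar>t - s\<bar> < \<eta>" using P[OF s x xd(2)] by blast
    define w where "w = p t - p s - of_real (t-s) * q s"
    have w: "cmod w \<le> \<epsilon> * \<bar>t-s\<bar>" using E s t by (simp add: w_def)
    have qs: "m \<le> cmod (q s)" using m s by auto
    have xe: "x - p s = w + of_real (t-s) * q s" using t by (simp add: w_def)
    have "Re ((x - p s) * cnj (nv s)) = Re (w * cnj (nv s)) + Re (of_real (t-s) * q s * cnj (nv s))"
      by (simp add: xe distrib_right)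
    then have "Re ((x - p s) * cnj (nv s)) = Re (w * cnj (nv s))" using tangent_Re by simp
    then have R: "\<bar>Re ((x - p s) * cnj (nv s))\<bar> \<le> \<epsilon> * \<bar>t-s\<bar>"
      using abs_Re_le_cmod[of "w * cnj (nv s)"] nv_norm[of s] w by (simp add: norm_mult)
    have "cmod (of_real (t-s) * q s) \<le> cmod (x - p s) + cmod w"
      using xe norm_triangle_ineq4[of "x - p s" w] by simp
    moreover have "cmod (of_real (t-s) * q s) = \<bar>t-s\<bar> * cmod (q s)" by (simp only: norm_mult norm_of_real)
    moreover have "\<bar>t-s\<bar> * m \<le> \<bar>t-s\<bar> * cmod (q s)" using qs by (simp add: mult_left_mono)
    ultimately have "\<bar>t-s\<bar> * m \<le> cmod (x - p s) + \<epsilon> * \<bar>t-s\<bar>" using w by linarith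
    then have L: "\<bar>t-s\<bar> * (m - \<epsilon>) \<le> cmod (x - p s)" by (simp add: algebra_simps)
    have ts0: "\<bar>t-s\<bar> > 0" using xd t by (auto)
    have km: "\<kappa> * m = 4 * \<epsilon>" by (simp add: \<epsilon>_def)
    have ke: "\<kappa> * \<epsilon> \<le> \<epsilon>" using \<kappa> \<epsilon> by (simp add: mult_le_cancel_right1)
    have k3: "\<kappa> * (m - \<epsilon>) > \<epsilon>" using km ke \<epsilon> by (simp add: right_diff_distrib)
    have "\<epsilon> * \<bar>t-s\<bar> < \<kappa> * (m - \<epsilon>) * \<bar>t-s\<bar>" using k3 ts0 by (simp add: mult_strict_right_mono)
    also have "\<dots> = \<kappa> * (\<bar>t-s\<bar> * (m - \<epsilon>))" by (simp add: algebra_simps)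
    also have "\<dots> \<le> \<kappa> * cmod (x - p s)" using L \<kappa> by (simp add: mult_left_mono)
    finally show ?thesis using R by linarith
  qed
  show ?thesis
    apply (rule exI[of _ \<delta>], rule exI[of _ \<eta>])
    using \<delta> \<eta> E P C by (auto simp: \<epsilon>_def)
qed

end


lemma cone_convex:
  fixes c \<nu> :: complex and \<sigma> \<kappa> \<delta> :: real
  assumes "\<kappa> \<ge> 0"
  shows "convex {y. cmod (y - c) < \<delta> \<and> \<kappa> * cmod (y - c) < \<sigma> * Re ((y - c) * cnj \<nu>)}"
proof (rule convexI)
  fix x y :: complex and u v :: real
  assume x: "x \<in> {y. cmod (y - c) < \<delta> \<and> \<kappa> * cmod (y - c) < \<sigma> * Re ((y - c) * cnj \<nu>)}"
    and y: "y \<in> {y. cmod (y - c) < \<delta> \<and> \<kappa> * cmod (y - c) < \<sigma> * Re ((y - c) * cnj \<nu>)}"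
    and u: "0 \<le> u" and v: "0 \<le> v" and uv: "u + v = 1"
  have e: "u *\<^sub>R x + v *\<^sub>R y - c = u *\<^sub>R (x - c) + v *\<^sub>R (y - c)"
  proof -
    have "c = u *\<^sub>R c + v *\<^sub>R c" using uv by (metis scaleR_add_left scaleR_one)
    then show ?thesis by (simp add: algebra_simps)
  qed
  have n: "cmod (u *\<^sub>R x + v *\<^sub>R y - c) \<le> u * cmod (x - c) + v * cmod (y - c)"
    unfolding e using norm_triangle_ineq[of "u *\<^sub>R (x - c)" "v *\<^sub>R (y - c)"] u v by simp
  have r: "\<sigma> * Re ((u *\<^sub>R x + v *\<^sub>R y - c) * cnj \<nu>) = u * (\<sigma> * Re ((x - c) * cnj \<nu>)) + v * (\<sigma> * Re ((y - c) * cnj \<nu>))"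
    unfolding e by (simp add: scaleR_conv_of_real algebra_simps)
  have "u * cmod (x - c) + v * cmod (y - c) < \<delta>"
  proof (cases "u = 0")
    case True then show ?thesis using uv y by simp
  next
    case False
    then have "u * cmod (x - c) < u * \<delta>" using x u by simp
    moreover have "v * cmod (y - c) \<le> v * \<delta>" using y v by (simp add: mult_left_mono)
    ultimately have "u * cmod (x - c) + v * cmod (y - c) < u * \<delta> + v * \<delta>" by linarith
    also have "\<dots> = \<delta>" using uv by (metis distrib_right mult_1)
    finally show ?thesis .
  qed
  moreover have "\<kappa> * (u * cmod (x - c) + v * cmod (y - c)) < u * (\<sigma> * Re ((x - c) * cnj \<nu>)) + v * (\<sigma> * Re ((y - c) * cnj \<nu>))"
  proof (cases "u = 0")
    case True then show ?thesis using uv y by simp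
  next
    case False
    then have "u * (\<kappa> * cmod (x - c)) < u * (\<sigma> * Re ((x - c) * cnj \<nu>))" using x u by simp
    moreover have "v * (\<kappa> * cmod (y - c)) \<le> v * (\<sigma> * Re ((y - c) * cnj \<nu>))" using y v by (simp add: mult_left_mono)
    ultimately show ?thesis by (simp add: algebra_simps)
  qed
  moreover have "\<kappa> * cmod (u *\<^sub>R x + v *\<^sub>R y - c) \<le> \<kappa> * (u * cmod (x - c) + v * cmod (y - c))"
    using n assms by (simp add: mult_left_mono)
  ultimately show "u *\<^sub>R x + v *\<^sub>R y \<in> {y. cmod (y - c) < \<delta> \<and> \<kappa> * cmod (y - c) < \<sigma> * Re ((y - c) * cnj \<nu>)}"
    using n r by auto
qed

lemma conn_side:
  assumes "connected A" "A \<subseteq> I \<union> Ou" "open I" "open Ou" "I \<inter> Ou = {}" "a \<in> A"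
  shows "(A \<subseteq> I \<and> a \<in> I) \<or> (A \<subseteq> Ou \<and> a \<in> Ou)"
proof -
  have "I \<inter> A = {} \<or> Ou \<inter> A = {}" by (rule connectedD[OF assms(1,3,4)]) (use assms in auto)
  then show ?thesis using assms by auto
qed


context curvepar
begin

definition tau :: "real \<Rightarrow> complex" where "tau s = q s / of_real (cmod (q s))"

lemma tau_norm: "cmod (tau s) = 1"
  using nz[of s] by (simp add: tau_def norm_divide)

lemma nv_tau: "nv s = \<i> * tau s" by (simp add: nv_def tau_def)

lemma cnj_tau: "cnj (tau s) * tau s = 1"
proof -
  have "tau s * cnj (tau s) = of_real ((cmod (tau s))\<^sup>2)" by (rule complex_norm_square[symmetric])
  then show ?thesis using tau_norm by (simp add: mult.commute)
qed

lemma tau_q: "of_real (a / cmod (q s)) * q s = of_real a * tau s"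
  using nz[of s] by (simp add: tau_def)

lemma decomp:
  "cmod (y - of_real (Re (y * cnj (tau s))) * tau s) = \<bar>Re (y * cnj (nv s))\<bar>"
proof -
  define z where "z = y * cnj (tau s)"
  have y: "y = z * tau s" unfolding z_def using cnj_tau[of s] by (simp add: mult.assoc)
  have e1: "Re (y * cnj (nv s)) = Im z" unfolding nv_tau z_def by simp
  have e2: "z - of_real (Re z) = \<i> * of_real (Im z)" by (simp add: complex_eq_iff)
  have e3: "y - of_real (Re z) * tau s = (z - of_real (Re z)) * tau s" using y by (simp add: algebra_simps)
  have e0: "Re (y * cnj (tau s)) = Re z" by (simp add: z_def)
  have "cmod (y - of_real (Re z) * tau s) = cmod (z - of_real (Re z))" by (simp only: e3 norm_mult tau_norm mult_1_right)
  also have "\<dots> = cmod (\<i> * of_real (Im z))" by (simp only: e2)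
  also have "\<dots> = \<bar>Im z\<bar>" by (simp add: norm_mult)
  finally show ?thesis using e0 e1 by simp
qed

lemma cont_nv: "continuous_on A nv"
  unfolding nv_def using nz by (intro continuous_intros cqo) auto

lemma compact_S: "compact (range p)" and range01: "range p = p ` {0..1}"
proof -
  have "range p \<subseteq> p ` {0..1}"
  proof
    fix z assume "z \<in> range p"
    then obtain t where t: "z = p t" "\<bar>t - 1/2\<bar> \<le> 1/2" using rep by blast
    from t(2) have "t - 1/2 \<le> 1/2 \<and> -(t - 1/2) \<le> 1/2" by (simp only: abs_le_iff)
    then have "0 \<le> t \<and> t \<le> 1" by linarith
    then show "z \<in> p ` {0..1}" using t by (intro image_eqI[of _ _ t]) auto
  qed
  then show "range p = p ` {0..1}" by blast
  then show "compact (range p)" using compact_continuous_image[OF continuous_on_subset[OF cp]] by auto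
qed

lemma cones:
  assumes oI: "open I" and oO: "open Ou" and dj: "I \<inter> Ou = {}" and un: "I \<union> Ou = - range p"
    and fI: "p T0 \<in> closure I" and fO: "p T0 \<in> closure Ou"
  shows "\<exists>\<nu>. cmod \<nu> = 1 \<and>
    (\<forall>\<kappa>>0. \<exists>\<delta>>0. \<forall>x. cmod (x - p T0) < \<delta> \<and> \<kappa> * cmod (x - p T0) < Re ((x - p T0) * cnj \<nu>) \<longrightarrow> x \<in> I) \<and>
    (\<forall>\<kappa>>0. \<exists>\<delta>>0. \<forall>x. cmod (x - p T0) < \<delta> \<and> \<kappa> * cmod (x - p T0) < - Re ((x - p T0) * cnj \<nu>) \<longrightarrow> x \<in> Ou)"
proof -
  obtain m where m: "m > 0" "\<forall>t\<in>{T0-2..T0+2}. m \<le> cmod (q t)" using minq[of T0] by blast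
  obtain \<delta>1 \<eta>1 where d1: "\<delta>1 > 0" "\<eta>1 > 0" "\<eta>1 \<le> 1/4" "\<delta>1 \<le> m * \<eta>1 / 2"
    and E1: "\<forall>s t. s \<in> {T0-1..T0+1} \<and> \<bar>t-s\<bar> \<le> \<eta>1 \<longrightarrow> cmod (p t - p s - of_real (t-s) * q s) \<le> (1/4 * m / 4) * \<bar>t-s\<bar>"
    and P1: "\<forall>s\<in>{T0-1..T0+1}. \<forall>x\<in>range p. cmod (x - p s) < \<delta>1 \<longrightarrow> (\<exists>t. x = p t \<and> \<bar>t - s\<bar> < \<eta>1)"
    and C1: "\<forall>s\<in>{T0-1..T0+1}. \<forall>x\<in>range p. 0 < cmod (x - p s) \<and> cmod (x - p s) < \<delta>1 \<longrightarrow> \<bar>Re ((x - p s) * cnj (nv s))\<bar> < 1/4 * cmod (x - p s)"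
    using avoid[of m T0 "1/4"] m by auto
  define J where "J = {T0-\<eta>1..T0+\<eta>1}"
  have JT: "J \<subseteq> {T0-1..T0+1}" using d1 by (auto simp: J_def)
  have T0J: "T0 \<in> J" using d1 by (simp add: J_def)
  define Cn where "Cn \<sigma> s = {y. cmod (y - p s) < \<delta>1 \<and> 1/4 * cmod (y - p s) < \<sigma> * Re ((y - p s) * cnj (nv s))}" for \<sigma> :: real and s
  define A where "A \<sigma> = \<Union> (Cn \<sigma> ` J)" for \<sigma>
  define c where "c \<sigma> s = p s + of_real (\<sigma> * \<delta>1 / 2) * nv s" for \<sigma> :: real and s
  have cin: "c \<sigma> s \<in> Cn \<sigma> s" if "\<bar>\<sigma>\<bar> = 1" for \<sigma> s
  proof -
    have n: "cmod (c \<sigma> s - p s) = \<delta>1 / 2" using that d1 by (simp add: c_def norm_mult nv_norm)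
    have "Re ((c \<sigma> s - p s) * cnj (nv s)) = \<sigma> * \<delta>1 / 2 * Re (nv s * cnj (nv s))"
      by (simp add: c_def mult.assoc)
    also have "nv s * cnj (nv s) = 1" using nv_norm[of s] by (simp add: complex_norm_square[symmetric])
    finally have "\<sigma> * Re ((c \<sigma> s - p s) * cnj (nv s)) = \<sigma> * \<sigma> * \<delta>1 / 2" by simp
    also have "\<sigma> * \<sigma> = 1" using that by (metis abs_mult_self_eq mult_1)
    finally show ?thesis using n d1 by (simp add: Cn_def)
  qed
  have CnS: "Cn \<sigma> s \<inter> range p = {}" if "\<bar>\<sigma>\<bar> = 1" "s \<in> J" for \<sigma> s
  proof (rule ccontr)
    assume "Cn \<sigma> s \<inter> range p \<noteq> {}"
    then obtain x where x: "x \<in> Cn \<sigma> s" "x \<in> range p" by blast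
    have a: "cmod (x - p s) < \<delta>1" "1/4 * cmod (x - p s) < \<sigma> * Re ((x - p s) * cnj (nv s))" using x by (auto simp: Cn_def)
    have "\<sigma> * Re ((x - p s) * cnj (nv s)) \<le> \<bar>Re ((x - p s) * cnj (nv s))\<bar>"
      using that(1) by (metis abs_ge_self abs_minus_cancel abs_mult mult_1 mult_minus_left)
    moreover have "0 < cmod (x - p s)"
    proof (rule ccontr)
      assume "\<not> 0 < cmod (x - p s)" then have "x = p s" by simp
      then show False using a by simp
    qed
    ultimately show False using C1 x(2) that(2) JT a by fastforce
  qed
  have conA: "connected (A \<sigma>)" and neA: "c \<sigma> T0 \<in> A \<sigma>" and AS: "A \<sigma> \<subseteq> I \<union> Ou" if "\<bar>\<sigma>\<bar> = 1" for \<sigma>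
  proof -
    have cc: "continuous_on J (c \<sigma>)" unfolding c_def
      by (intro continuous_intros cont_nv continuous_on_subset[OF cp]) auto
    have K: "connected (c \<sigma> ` J)" by (rule connected_continuous_image[OF cc]) (simp add: J_def)
    have "connected (c \<sigma> ` J \<union> \<Union> (Cn \<sigma> ` J))"
    proof (rule connected_Un_UN[OF K])
      fix X assume "X \<in> Cn \<sigma> ` J"
      then obtain s where s: "s \<in> J" "X = Cn \<sigma> s" by blast
      show "connected X" unfolding s(2) Cn_def by (rule convex_connected[OF cone_convex]) simp
      show "c \<sigma> ` J \<inter> X \<noteq> {}" using cin[OF that] s by blast
    qed
    moreover have "c \<sigma> ` J \<union> \<Union> (Cn \<sigma> ` J) = A \<sigma>" using cin[OF that] by (auto simp: A_def)
    ultimately show "connected (A \<sigma>)" by simp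
    show "c \<sigma> T0 \<in> A \<sigma>" using cin[OF that] T0J by (auto simp: A_def)
    show "A \<sigma> \<subseteq> I \<union> Ou" using CnS[OF that] un by (auto simp: A_def)
  qed
  have side: "(A \<sigma> \<subseteq> I) \<or> (A \<sigma> \<subseteq> Ou)" if "\<bar>\<sigma>\<bar> = 1" for \<sigma>
    using conn_side[OF conA[OF that] AS[OF that] oI oO dj neA[OF that]] by blast
  have near: "x \<in> A 1 \<union> A (-1)" if x: "cmod (x - p T0) < \<delta>1 / 3" "x \<notin> range p" for x
  proof -
    obtain z1 where z1: "z1 \<in> range p" "\<And>y. y \<in> range p \<Longrightarrow> dist x z1 \<le> dist x y"
      using distance_attains_inf[of "range p" x] compact_S compact_imp_closed by blast
    have "dist x z1 \<le> dist x (p T0)" using z1 by blast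
    then have xz1: "cmod (x - z1) < \<delta>1 / 3" using x by (simp add: dist_norm)
    then have "cmod (z1 - p T0) < \<delta>1" using x norm_triangle_ineq4[of "z1 - x" "p T0 - x"] d1
      by (simp add: norm_minus_commute)
    then obtain s where s: "z1 = p s" "\<bar>s - T0\<bar> < \<eta>1" using P1 z1(1) d1 by fastforce
    have sJ: "s \<in> J" using s by (auto simp: J_def)
    have sT: "s \<in> {T0-1..T0+1}" using sJ JT by blast
    define y where "y = x - p s"
    define r where "r = cmod y"
    have r0: "r > 0" using x(2) unfolding r_def y_def by auto
    have rd: "r < \<delta>1 / 3" using xz1 s by (simp add: r_def y_def)
    have big: "r / 4 < \<bar>Re (y * cnj (nv s))\<bar>"
    proof (rule ccontr)
      assume nb: "\<not> r / 4 < \<bar>Re (y * cnj (nv s))\<bar>"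
      define \<alpha> where "\<alpha> = Re (y * cnj (tau s))"
      have al: "\<bar>\<alpha>\<bar> \<le> r" unfolding \<alpha>_def r_def using abs_Re_le_cmod[of "y * cnj (tau s)"] by (simp add: norm_mult tau_norm)
      have qs: "m \<le> cmod (q s)" using m sT by auto
      define t where "t = s + \<alpha> / cmod (q s)"
      have ts: "\<bar>t - s\<bar> \<le> r / m"
      proof -
        have "\<bar>t - s\<bar> = \<bar>\<alpha>\<bar> / cmod (q s)" by (simp add: t_def)
        also have "\<dots> \<le> r / cmod (q s)" using al nz[of s] by (simp add: divide_right_mono)
        also have "\<dots> \<le> r / m" using qs m r0 by (simp add: frac_le)
        finally show ?thesis .
      qed
      have "r / m \<le> \<eta>1"
      proof -
        have "r < m * \<eta>1 / 2" using rd d1 by linarith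
        then have "r \<le> \<eta>1 * m" using r0 by (simp add: mult.commute)
        then show ?thesis using m by (simp add: divide_le_eq)
      qed
      then have tsl: "\<bar>t - s\<bar> \<le> \<eta>1" using ts by linarith
      have w: "cmod (p t - p s - of_real (t-s) * q s) \<le> (1/4 * m / 4) * \<bar>t-s\<bar>" using E1 sT tsl by blast
      have w2: "(1/4 * m / 4) * \<bar>t-s\<bar> \<le> r / 16" using ts m by (simp add: field_simps)
      have tq: "of_real (t-s) * q s = of_real \<alpha> * tau s" using tau_q[of \<alpha> s] by (simp add: t_def)
      have eqn: "x - p t = (y - of_real \<alpha> * tau s) - (p t - p s - of_real (t-s) * q s)"
        using tq by (simp add: y_def)
      have "cmod (x - p t) \<le> cmod (y - of_real \<alpha> * tau s) + cmod (p t - p s - of_real (t-s) * q s)"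
        unfolding eqn by (rule norm_triangle_ineq4)
      also have "cmod (y - of_real \<alpha> * tau s) = \<bar>Re (y * cnj (nv s))\<bar>" unfolding \<alpha>_def by (rule decomp)
      finally have "cmod (x - p t) < r" using nb w w2 r0 by linarith
      moreover have "dist x z1 \<le> dist x (p t)" using z1(2) by blast
      ultimately show False using s by (simp add: dist_norm r_def y_def)
    qed
    show ?thesis
    proof (cases "Re (y * cnj (nv s)) > 0")
      case True
      then have "x \<in> Cn 1 s" using big rd d1 by (simp add: Cn_def y_def r_def)
      then show ?thesis using sJ by (auto simp: A_def)
    next
      case False
      then have "x \<in> Cn (-1) s" using big rd d1 by (simp add: Cn_def y_def r_def)
      then show ?thesis using sJ by (auto simp: A_def)
    qed
  qed
  obtain yI where yI: "yI \<in> I" "dist yI (p T0) < \<delta>1 / 3" using fI d1 unfolding closure_approachable by (meson divide_pos_pos zero_less_numeral)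
  obtain yO where yO: "yO \<in> Ou" "dist yO (p T0) < \<delta>1 / 3" using fO d1 unfolding closure_approachable by (meson divide_pos_pos zero_less_numeral)
  have yIA: "yI \<in> A 1 \<union> A (-1)" using near yI un by (auto simp: dist_norm)
  have yOA: "yO \<in> A 1 \<union> A (-1)" using near yO un by (auto simp: dist_norm)
  have sides: "(A 1 \<subseteq> I \<and> A (-1) \<subseteq> Ou) \<or> (A 1 \<subseteq> Ou \<and> A (-1) \<subseteq> I)"
    using side[of 1] side[of "-1"] yIA yOA yI yO dj by auto
  have cone: "\<exists>\<delta>>0. \<forall>x. cmod (x - p T0) < \<delta> \<and> \<kappa> * cmod (x - p T0) < \<sigma> * Re ((x - p T0) * cnj (nv T0)) \<longrightarrow> x \<in> X"
    if \<sigma>: "\<bar>\<sigma>\<bar> = 1" and \<kappa>: "\<kappa> > 0" and AX: "A \<sigma> \<subseteq> X" and X: "X = I \<or> X = Ou" for \<sigma> \<kappa> X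
  proof -
    define \<kappa>' where "\<kappa>' = min \<kappa> (1/4)"
    have k': "0 < \<kappa>'" "\<kappa>' \<le> 1" "\<kappa>' \<le> \<kappa>" "\<kappa>' \<le> 1/4" using \<kappa> by (auto simp: \<kappa>'_def)
    obtain \<delta>2 where d2: "\<delta>2 > 0"
      and C2: "\<forall>s\<in>{T0-1..T0+1}. \<forall>x\<in>range p. 0 < cmod (x - p s) \<and> cmod (x - p s) < \<delta>2 \<longrightarrow> \<bar>Re ((x - p s) * cnj (nv s))\<bar> < \<kappa>' * cmod (x - p s)"
      using avoid[of m T0 \<kappa>'] m k' by blast
    define \<delta> where "\<delta> = min \<delta>1 \<delta>2"
    have d: "\<delta> > 0" "\<delta> \<le> \<delta>1" "\<delta> \<le> \<delta>2" using d1 d2 by (auto simp: \<delta>_def)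
    define Q where "Q = {y. cmod (y - p T0) < \<delta> \<and> \<kappa>' * cmod (y - p T0) < \<sigma> * Re ((y - p T0) * cnj (nv T0))}"
    have cQ: "connected Q" unfolding Q_def by (rule convex_connected[OF cone_convex]) (use k' in simp)
    define y0 where "y0 = p T0 + of_real (\<sigma> * \<delta> / 2) * nv T0"
    have y0n: "cmod (y0 - p T0) = \<delta> / 2" using \<sigma> d by (simp add: y0_def norm_mult nv_norm)
    have "\<sigma> * Re ((y0 - p T0) * cnj (nv T0)) = \<sigma> * \<sigma> * \<delta> / 2 * Re (nv T0 * cnj (nv T0))"
      by (simp add: y0_def mult.assoc)
    also have "nv T0 * cnj (nv T0) = 1" using nv_norm[of T0] by (simp add: complex_norm_square[symmetric])
    also have "\<sigma> * \<sigma> = 1" using \<sigma> by (metis abs_mult_self_eq mult_1)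
    finally have y0r: "\<sigma> * Re ((y0 - p T0) * cnj (nv T0)) = \<delta> / 2" by simp
    have "\<kappa>' * (\<delta> / 2) \<le> (1/4) * (\<delta> / 2)" by (rule mult_right_mono) (use k' d in auto)
    then have ineq: "\<kappa>' * cmod (y0 - p T0) < \<sigma> * Re ((y0 - p T0) * cnj (nv T0))"
      unfolding y0n y0r using d by linarith
    have y0Q: "y0 \<in> Q" unfolding Q_def mem_Collect_eq by (rule conjI[OF _ ineq]) (use y0n d in linarith)
    have y0C: "y0 \<in> Cn \<sigma> T0" using y0n y0r d by (simp add: Cn_def)
    then have y0X: "y0 \<in> X" using AX T0J by (auto simp: A_def)
    have QS: "Q \<subseteq> I \<union> Ou"
    proof
      fix x assume xQ: "x \<in> Q"
      have "x \<notin> range p"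
      proof
        assume xr: "x \<in> range p"
        have a: "cmod (x - p T0) < \<delta>2" "\<kappa>' * cmod (x - p T0) < \<sigma> * Re ((x - p T0) * cnj (nv T0))"
          using xQ d by (auto simp: Q_def)
        have "\<sigma> * Re ((x - p T0) * cnj (nv T0)) \<le> \<bar>Re ((x - p T0) * cnj (nv T0))\<bar>"
          using \<sigma> by (metis abs_ge_self abs_minus_cancel abs_mult mult_1 mult_minus_left)
        moreover have "0 < cmod (x - p T0)"
        proof (rule ccontr)
          assume "\<not> 0 < cmod (x - p T0)" then have "x = p T0" by simp
          then show False using a by simp
        qed
        moreover have "T0 \<in> {T0-1..T0+1}" by simp
        ultimately show False using C2 xr a by fastforce
      qed
      then show "x \<in> I \<union> Ou" using un by blast
    qed
    have "Q \<subseteq> X"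
      using conn_side[OF cQ QS oI oO dj y0Q] y0X X dj by blast
    moreover have "x \<in> Q" if "cmod (x - p T0) < \<delta> \<and> \<kappa> * cmod (x - p T0) < \<sigma> * Re ((x - p T0) * cnj (nv T0))" for x
    proof -
      have "\<kappa>' * cmod (x - p T0) \<le> \<kappa> * cmod (x - p T0)" using k' by (simp add: mult_right_mono)
      then show ?thesis using that by (simp add: Q_def)
    qed
    ultimately show ?thesis using d by blast
  qed
  from sides show ?thesis
  proof
    assume h: "A 1 \<subseteq> I \<and> A (-1) \<subseteq> Ou"
    show ?thesis
    proof (intro exI[of _ "nv T0"] conjI allI impI)
      show "cmod (nv T0) = 1" by (rule nv_norm)
      fix \<kappa> :: real assume \<kappa>: "\<kappa> > 0"
      show "\<exists>\<delta>>0. \<forall>x. cmod (x - p T0) < \<delta> \<and> \<kappa> * cmod (x - p T0) < Re ((x - p T0) * cnj (nv T0)) \<longrightarrow> x \<in> I"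
        using cone[of 1 \<kappa> I] \<kappa> h by simp
      show "\<exists>\<delta>>0. \<forall>x. cmod (x - p T0) < \<delta> \<and> \<kappa> * cmod (x - p T0) < - Re ((x - p T0) * cnj (nv T0)) \<longrightarrow> x \<in> Ou"
        using cone[of "-1" \<kappa> Ou] \<kappa> h by simp
    qed
  next
    assume h: "A 1 \<subseteq> Ou \<and> A (-1) \<subseteq> I"
    show ?thesis
    proof (intro exI[of _ "- nv T0"] conjI allI impI)
      show "cmod (- nv T0) = 1" using nv_norm by simp
      fix \<kappa> :: real assume \<kappa>: "\<kappa> > 0"
      show "\<exists>\<delta>>0. \<forall>x. cmod (x - p T0) < \<delta> \<and> \<kappa> * cmod (x - p T0) < Re ((x - p T0) * cnj (- nv T0)) \<longrightarrow> x \<in> I"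
      proof -
        have e: "\<And>y. Re (y * cnj (- nv T0)) = (-1) * Re (y * cnj (nv T0))" by simp
        show ?thesis unfolding e using cone[of "-1" \<kappa> I] \<kappa> h by simp
      qed
      show "\<exists>\<delta>>0. \<forall>x. cmod (x - p T0) < \<delta> \<and> \<kappa> * cmod (x - p T0) < - Re ((x - p T0) * cnj (- nv T0)) \<longrightarrow> x \<in> Ou"
      proof -
        have e: "\<And>y. - Re (y * cnj (- nv T0)) = 1 * Re (y * cnj (nv T0))" by simp
        show ?thesis unfolding e using cone[of 1 \<kappa> Ou] \<kappa> h by simp
      qed
    qed
  qed
qed

end


lemma smooth_cones:
  assumes sj: "smooth_jordan_curve S" and z0: "z0 \<in> S"
  shows "\<exists>\<nu>. cmod \<nu> = 1 \<and>
    (\<forall>\<kappa>>0. \<exists>\<delta>>0. \<forall>x. cmod (x - z0) < \<delta> \<and> \<kappa> * cmod (x - z0) < Re ((x - z0) * cnj \<nu>) \<longrightarrow> x \<in> inside S) \<and>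
    (\<forall>\<kappa>>0. \<exists>\<delta>>0. \<forall>x. cmod (x - z0) < \<delta> \<and> \<kappa> * cmod (x - z0) < - Re ((x - z0) * cnj \<nu>) \<longrightarrow> x \<in> outside S)"
proof -
  obtain \<gamma> \<gamma>' where sp: "simple_path \<gamma>" and cl: "pathfinish \<gamma> = pathstart \<gamma>" and im: "path_image \<gamma> = S"
    and der: "\<forall>t\<in>{0..1}. (\<gamma> has_vector_derivative \<gamma>' t) (at t within {0..1}) \<and> \<gamma>' t \<noteq> 0"
    and cd: "continuous_on {0..1} \<gamma>'" and e: "\<gamma>' 0 = \<gamma>' 1"
    using sj unfolding smooth_jordan_curve_def by blast
  have cl': "\<gamma> 0 = \<gamma> 1" using cl by (simp add: pathfinish_def pathstart_def)
  define p where "p t = \<gamma> (frac t)" for t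
  define q where "q t = \<gamma>' (frac t)" for t
  have frac01: "frac t \<in> {0..1}" for t :: real using frac_lt_1[of t] by simp
  interpret curvepar p q
  proof
    show "(p has_vector_derivative q t) (at t)" for t
      unfolding p_def q_def by (rule periodic_ext(1)[OF cl']) (use der cd e in auto)
    show "isCont q t" for t
      unfolding q_def by (rule periodic_ext(2)[OF cl']) (use der cd e in auto)
    show "q t \<noteq> 0" for t unfolding q_def using der frac01 by blast
    show "p (t + real_of_int k) = p t" for t k
    proof -
      have "frac (t + real_of_int k) = frac t" by (simp add: frac_def)
      then show ?thesis by (simp add: p_def)
    qed
    show "\<exists>k::int. t = s + k" if "p s = p t" for s t
    proof -
      have lf: "loop_free \<gamma>" using sp by (simp add: simple_path_def)
      have "frac s = frac t \<or> frac s = 0 \<and> frac t = 1 \<or> frac s = 1 \<and> frac t = 0"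
        using lf that frac01 unfolding loop_free_def p_def by blast
      then have "frac s = frac t" using frac_lt_1 by (metis less_irrefl)
      then have "t = s + (floor t - floor s)" by (simp add: frac_def)
      then show ?thesis by blast
    qed
  qed
  have rp: "range p = S"
  proof -
    have "range p \<subseteq> \<gamma> ` {0..1}" using frac01 by (auto simp: p_def)
    moreover have "\<gamma> ` {0..1} \<subseteq> range p"
    proof
      fix z assume "z \<in> \<gamma> ` {0..1}"
      then obtain t where t: "t \<in> {0..1}" "z = \<gamma> t" by blast
      show "z \<in> range p"
      proof (cases "t = 1")
        case True then show ?thesis using t cl' by (auto simp: p_def intro!: image_eqI[of _ _ 0])
      next
        case False
        then have "frac t = t" using t by (simp add: frac_eq)
        then show ?thesis using t by (auto simp: p_def intro!: image_eqI[of _ _ t])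
      qed
    qed
    ultimately show ?thesis using im by (auto simp: path_image_def)
  qed
  obtain T0 where T0: "z0 = p T0" using z0 rp by blast
  have J: "open (inside S)" "open (outside S)" "inside S \<inter> outside S = {}" "inside S \<union> outside S = - S"
     "frontier (inside S) = S" "frontier (outside S) = S"
    using Jordan_inside_outside[OF sp cl] im by auto
  have "p T0 \<in> closure (inside S)" "p T0 \<in> closure (outside S)"
    using J(5,6) z0 T0 frontier_def by auto
  then show ?thesis using cones[of "inside S" "outside S" T0] J rp T0 by simp
qed


lemma cos_ge_half: "\<bar>\<theta>\<bar> \<le> pi/3 \<Longrightarrow> cos \<theta> \<ge> 1/2"
proof -
  assume h: "\<bar>\<theta>\<bar> \<le> pi/3"
  have "cos (pi/3) \<le> cos \<bar>\<theta>\<bar>" by (rule cos_monotone_0_pi_le) (use h pi_gt_zero in auto)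
  then show ?thesis by (simp add: cos_60)
qed

lemma angle_choice:
  fixes \<nu> \<mu> c :: complex and m :: nat
  assumes m: "m \<ge> 2" and nu: "cmod \<nu> = 1" and mu: "cmod \<mu> = 1" and c: "c \<noteq> 0"
  shows "\<exists>u. cmod u = 1 \<and> Re (u * cnj \<nu>) \<ge> 1/2 \<and> Re (u ^ m * c * cnj \<mu>) \<ge> cmod c / 2"
proof -
  define \<zeta> where "\<zeta> = \<nu> ^ m * c * cnj \<mu> / of_real (cmod c)"
  have zn: "cmod \<zeta> = 1" using nu mu c by (simp add: \<zeta>_def norm_mult norm_divide norm_power)
  define x where "x = Arg (cnj \<zeta>)"
  have xb: "- pi < x" "x \<le> pi" using Arg_bounded[of "cnj \<zeta>"] by (auto simp: x_def)
  have "cis x = sgn (cnj \<zeta>)" unfolding x_def by (rule cis_Arg) (use zn in auto)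
  also have "\<dots> = cnj \<zeta>" using zn by (simp add: sgn_eq)
  finally have zc: "\<zeta> = cis (- x)" by (metis cis_cnj complex_cnj_cnj)
  define \<phi> where "\<phi> = 2 * x / (3 * m)"
  define u where "u = \<nu> * cis \<phi>"
  have un: "cmod u = 1" using nu by (simp add: u_def norm_mult)
  have nn: "\<nu> * cnj \<nu> = 1" using nu by (simp add: complex_norm_square[symmetric])
  have "u * cnj \<nu> = cis \<phi>" using nn by (simp add: u_def algebra_simps)
  then have r1: "Re (u * cnj \<nu>) = cos \<phi>" by simp
  have "\<bar>\<phi>\<bar> \<le> pi / 3"
  proof -
    have "\<bar>\<phi>\<bar> = 2 * \<bar>x\<bar> / (3 * m)" using m by (simp add: \<phi>_def abs_divide abs_mult)
    also have "\<dots> \<le> 2 * pi / (3 * 2)"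
      by (rule frac_le) (use xb m in auto)
    finally show ?thesis by simp
  qed
  then have c1: "Re (u * cnj \<nu>) \<ge> 1/2" using r1 cos_ge_half by simp
  have eu: "u ^ m = \<nu> ^ m * cis (real m * \<phi>)" unfolding u_def power_mult_distrib using Complex.DeMoivre[of \<phi> m] by metis
  have ez: "\<zeta> * of_real (cmod c) = \<nu> ^ m * c * cnj \<mu>" using c by (simp add: \<zeta>_def)
  have "u ^ m * c * cnj \<mu> = \<zeta> * cis (real m * \<phi>) * of_real (cmod c)"
    unfolding eu by (metis ez mult.assoc mult.commute)
  also have "real m * \<phi> = 2 * x / 3" using m by (simp add: \<phi>_def)
  also have "\<zeta> * cis (2 * x / 3) = cis (- (x / 3))" unfolding zc cis_mult by (simp add: algebra_simps)
  finally have e2: "u ^ m * c * cnj \<mu> = cis (- (x / 3)) * of_real (cmod c)" .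
  have "\<bar>- (x/3)\<bar> \<le> pi/3" using xb by simp
  then have "cos (- (x/3)) \<ge> 1/2" by (rule cos_ge_half)
  then have "1/2 * cmod c \<le> cos (- (x/3)) * cmod c" by (rule mult_right_mono) simp
  then have "Re (u ^ m * c * cnj \<mu>) \<ge> 1/2 * cmod c" unfolding e2 by simp
  then show ?thesis using un c1 by (intro exI[of _ u]) auto
qed


lemma inside_sub_G:
  assumes sc: "simply_connected G" and sj: "smooth_jordan_curve S" and SG: "S \<subseteq> G"
  shows "inside S \<subseteq> G"
proof
  fix z assume z: "z \<in> inside S"
  obtain \<gamma> where sp: "simple_path \<gamma>" and cl: "pathfinish \<gamma> = pathstart \<gamma>" and im: "path_image \<gamma> = S"
    using sj unfolding smooth_jordan_curve_def by blast
  show "z \<in> G"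
  proof (rule ccontr)
    assume zG: "z \<notin> G"
    have "winding_number \<gamma> z = 0"
      by (rule simply_connected_imp_winding_number_zero[OF sc simple_path_imp_path[OF sp]]) (use im SG cl zG in auto)
    moreover have "winding_number \<gamma> z = 1 \<or> winding_number \<gamma> z = -1"
      using simple_closed_path_winding_number_inside[OF sp] z im by metis
    ultimately show False by auto
  qed
qed

lemma jordan_facts:
  assumes sj: "smooth_jordan_curve S"
  shows "open (inside S)" "open (outside S)" "inside S \<inter> outside S = {}" "inside S \<union> outside S = - S"
    "frontier (inside S) = S" "bounded S"
proof -
  obtain \<gamma> where sp: "simple_path \<gamma>" and cl: "pathfinish \<gamma> = pathstart \<gamma>" and im: "path_image \<gamma> = S"
    using sj unfolding smooth_jordan_curve_def by blast
  show "open (inside S)" "open (outside S)" "inside S \<inter> outside S = {}" "inside S \<union> outside S = - S"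
    "frontier (inside S) = S"
    using Jordan_inside_outside[OF sp cl] im by auto
  show "bounded S" using compact_path_image[OF simple_path_imp_path[OF sp]] im compact_imp_bounded by blast
qed

lemma outside_big:
  assumes sj: "smooth_jordan_curve \<Gamma>"
  shows "\<exists>R>0. \<forall>w. R < cmod w \<longrightarrow> w \<in> outside \<Gamma>"
proof -
  have "bounded (- outside \<Gamma>)" using cobounded_outside jordan_facts(6)[OF sj] by blast
  then obtain B where B: "\<forall>x\<in>- outside \<Gamma>. norm x \<le> B" unfolding bounded_iff by blast
  show ?thesis
  proof (intro exI[of _ "max B 1"] conjI allI impI)
    show "max B 1 > 0" by simp
    fix w assume "max B 1 < cmod w"
    then show "w \<in> outside \<Gamma>" using B by force
  qed
qed

lemma enat_contra: "enat n + 1 \<le> cc \<Longrightarrow> cc = enat n \<Longrightarrow> False"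
  by (simp add: one_enat_def)


lemma boundary_pt:
  assumes sj: "smooth_jordan_curve S" and z0: "z0 \<in> S"
  shows "z0 \<notin> inside S" "z0 islimpt inside S"
proof -
  have J: "inside S \<union> outside S = - S" "frontier (inside S) = S" using jordan_facts[OF sj] by auto
  show ni: "z0 \<notin> inside S" using J(1) z0 by blast
  have "z0 \<in> closure (inside S)" using J(2) z0 frontier_def by auto
  then show "z0 islimpt inside S" using ni by (simp add: closure_def)
qed

lemma near_point:
  assumes mf: "meromorphic_sphere f G" and z0G: "z0 \<in> G" and lim: "z0 islimpt D" and e: "e > 0" and \<rho>: "\<rho> > 0"
  shows "\<exists>q\<in>D. dist q z0 < \<rho> \<and> near (f z0) e (f q)"
proof -
  obtain d where d: "d > 0" "\<And>q. q \<noteq> z0 \<Longrightarrow> dist q z0 < d \<Longrightarrow> near (f z0) e (f q)"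
    using nearC[OF mf z0G e] unfolding eventually_at by auto
  obtain q where q: "q \<in> D" "q \<noteq> z0" "dist q z0 < min d \<rho>"
    using lim d \<rho> unfolding islimpt_approachable by (metis min_less_iff_conj)
  then show ?thesis using d by (intro bexI[of _ q]) auto
qed

lemma part1:
  assumes mf: "meromorphic_sphere f G" and DG: "inside S \<subseteq> G" and sjS: "smooth_jordan_curve S"
    and SG: "S \<subseteq> G" and sjG: "smooth_jordan_curve \<Gamma>"
    and hm: "\<forall>w\<in>inside \<Gamma>. count_preimages f (inside S) (Some w) = enat n_minus"
    and hp: "\<forall>w\<in>outside \<Gamma>. count_preimages f (inside S) (Some w) = enat n_plus"
    and hn: "count_preimages f (inside S) None = enat n_plus"
    and z0: "z0 \<in> S"
  shows "f z0 \<in> Some ` \<Gamma>"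
proof (rule ccontr)
  assume nG: "f z0 \<notin> Some ` \<Gamma>"
  define D where "D = inside S"
  have JG: "open (inside \<Gamma>)" "open (outside \<Gamma>)" "inside \<Gamma> \<union> outside \<Gamma> = - \<Gamma>" using jordan_facts[OF sjG] by auto
  have "\<exists>\<epsilon>0 n. \<epsilon>0 > 0 \<and> (\<forall>w. near (f z0) \<epsilon>0 w \<longrightarrow> count_preimages f D w = enat n) \<and> count_preimages f D (f z0) = enat n"
  proof (cases "f z0")
    case None
    obtain R where R: "R > 0" "\<forall>w. R < cmod w \<longrightarrow> w \<in> outside \<Gamma>" using outside_big[OF sjG] by blast
    show ?thesis
    proof (intro exI[of _ "1/R"] exI[of _ n_plus] conjI allI impI)
      show "1/R > 0" using R by simp
      show "count_preimages f D (f z0) = enat n_plus" using None hn by (simp add: D_def)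
      fix w assume "near (f z0) (1/R) w"
      then have "w = None \<or> (\<exists>a. w = Some a \<and> a \<noteq> 0 \<and> cmod (inverse a) < 1/R)" using None by (simp add: near_def)
      then show "count_preimages f D w = enat n_plus"
      proof
        assume "w = None" then show ?thesis using hn by (simp add: D_def)
      next
        assume "\<exists>a. w = Some a \<and> a \<noteq> 0 \<and> cmod (inverse a) < 1/R"
        then obtain a where a: "w = Some a" "a \<noteq> 0" "cmod (inverse a) < 1/R" by blast
        then have "1 / cmod a < 1 / R" by (simp add: norm_inverse divide_inverse)
        moreover have pa: "0 < cmod a" using a by simp
        ultimately have "R < cmod a"
        proof -
          assume lt: "1 / cmod a < 1 / R"
          show "R < cmod a"
          proof (rule ccontr)
            assume "\<not> R < cmod a"
            then have "cmod a \<le> R" by simp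
            then have "1 / R \<le> 1 / cmod a" using divide_left_mono[of "cmod a" R 1] pa R by simp
            then show False using lt by linarith
          qed
        qed
        then have "a \<in> outside \<Gamma>" using R by blast
        then show ?thesis using hp a by (simp add: D_def)
      qed
    qed
  next
    case (Some v)
    then have "v \<notin> \<Gamma>" using nG by blast
    then have vio: "v \<in> inside \<Gamma> \<or> v \<in> outside \<Gamma>" using JG by blast
    then obtain X n where X: "open X" "v \<in> X" "\<forall>w\<in>X. count_preimages f D (Some w) = enat n"
    proof
      assume "v \<in> inside \<Gamma>" then show ?thesis using that[of "inside \<Gamma>" n_minus] JG hm by (simp add: D_def)
    next
      assume "v \<in> outside \<Gamma>" then show ?thesis using that[of "outside \<Gamma>" n_plus] JG hp by (simp add: D_def)
    qed
    obtain \<epsilon>0 where e0: "\<epsilon>0 > 0" "ball v \<epsilon>0 \<subseteq> X" using X openE by blast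
    show ?thesis
    proof (intro exI[of _ \<epsilon>0] exI[of _ n] conjI allI impI)
      show "\<epsilon>0 > 0" by (rule e0)
      show "count_preimages f D (f z0) = enat n" using X Some by simp
      fix w assume "near (f z0) \<epsilon>0 w"
      then obtain a where a: "w = Some a" "cmod (a - v) < \<epsilon>0" using Some by (auto simp: near_def)
      then have "a \<in> X" using e0 by (auto simp: dist_norm norm_minus_commute)
      then show "count_preimages f D w = enat n" using X a by simp
    qed
  qed
  then obtain \<epsilon>0 n where e0: "\<epsilon>0 > 0" and cn: "\<forall>w. near (f z0) \<epsilon>0 w \<longrightarrow> count_preimages f D w = enat n"
    and c0: "count_preimages f D (f z0) = enat n" by blast
  have oD: "open D" using jordan_facts[OF sjS] by (simp add: D_def)
  have bz: "z0 \<notin> D" "z0 islimpt D" using boundary_pt[OF sjS z0] by (auto simp: D_def)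
  obtain e \<rho> where e: "e > 0" "\<rho> > 0"
    and K: "\<forall>q\<in>D. dist q z0 < \<rho> \<longrightarrow> near (f z0) e (f q) \<longrightarrow> count_preimages f D (f q) \<ge> enat n + 1"
    using key[OF mf DG[folded D_def] oD bz(1) c0] by blast
  obtain q where q: "q \<in> D" "dist q z0 < \<rho>" "near (f z0) (min e \<epsilon>0) (f q)"
    using near_point[OF mf _ bz(2), of "min e \<epsilon>0" \<rho>] z0 SG e e0 by auto
  have "count_preimages f D (f q) \<ge> enat n + 1" using K q near_mono[OF q(3)] by simp
  moreover have "count_preimages f D (f q) = enat n" using cn near_mono[OF q(3)] by simp
  ultimately show False by (rule enat_contra)
qed


lemma part2:
  assumes mf: "meromorphic_sphere f G" and DG: "inside S \<subseteq> G" and sjS: "smooth_jordan_curve S"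
    and SG: "S \<subseteq> G" and sjG: "smooth_jordan_curve \<Gamma>"
    and hm: "\<forall>w\<in>inside \<Gamma>. count_preimages f (inside S) (Some w) = enat n_minus"
    and hp: "\<forall>w\<in>outside \<Gamma>. count_preimages f (inside S) (Some w) = enat n_plus"
    and hg: "\<forall>w\<in>\<Gamma>. count_preimages f (inside S) (Some w) = enat (min n_minus n_plus)"
    and z0: "z0 \<in> S" and fz: "f z0 = Some w0" and w0: "w0 \<in> \<Gamma>"
  shows "\<not> critical_point f z0"
proof
  assume crit: "critical_point f z0"
  define D where "D = inside S"
  have z0G: "z0 \<in> G" using z0 SG by blast
  obtain r0 where r0: "r0 > 0" "ball z0 r0 \<subseteq> G"
    and gb: "\<forall>x\<in>ball z0 r0. x \<noteq> z0 \<longrightarrow> (\<exists>v. f x = Some v \<and> (f z0 = None \<longrightarrow> 1 < cmod v))"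
    and hol: "local_chart f z0 holomorphic_on ball z0 r0"
    using good_ball[OF mf z0G] by blast
  define \<phi> where "\<phi> = local_chart f z0"
  have \<phi>0: "\<phi> z0 = w0" using fz by (simp add: \<phi>_def local_chart_def)
  have f\<phi>: "f x = Some (\<phi> x)" if xb: "x \<in> ball z0 r0" for x
  proof (cases "x = z0")
    case True then show ?thesis using fz \<phi>0 by simp
  next
    case False
    then obtain v where "f x = Some v" using gb xb by blast
    then show ?thesis using fz by (simp add: \<phi>_def local_chart_def)
  qed
  have c0: "count_preimages f D (Some w0) = enat (min n_minus n_plus)" using hg w0 by (simp add: D_def)
  have oD: "open D" using jordan_facts[OF sjS] by (simp add: D_def)
  have bz: "z0 \<notin> D" "z0 islimpt D" using boundary_pt[OF sjS z0] by (auto simp: D_def)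
  have DG': "D \<subseteq> G" using DG by (simp add: D_def)
  have z0b: "z0 \<in> ball z0 r0" using r0 by simp
  show False
  proof (cases "mero_mult f z0")
    case infinity
    have "\<not> (\<exists>n\<ge>1. (deriv ^^ n) (local_chart f z0) z0 \<noteq> 0)"
    proof
      assume "\<exists>n\<ge>1. (deriv ^^ n) (local_chart f z0) z0 \<noteq> 0"
      then have "mero_mult f z0 = enat (LEAST n. n \<ge> 1 \<and> (deriv ^^ n) (local_chart f z0) z0 \<noteq> 0)"
        unfolding mero_mult_def by (rule if_P)
      then show False using infinity by simp
    qed
    then have all0: "\<And>n. 0 < n \<Longrightarrow> (deriv ^^ n) \<phi> z0 = 0" unfolding \<phi>_def by auto
    have const: "\<phi> x = \<phi> z0" if "x \<in> ball z0 r0" for x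
      by (rule holomorphic_fun_eq_const_on_connected[OF hol[folded \<phi>_def] open_ball connected_ball all0 z0b that])
    have "infinite (D \<inter> ball z0 r0)" using bz(2) r0 islimpt_eq_infinite_ball by blast
    moreover have "D \<inter> ball z0 r0 \<subseteq> {z\<in>D. f z = Some w0}" using f\<phi> const \<phi>0 by auto
    ultimately have "infinite {z\<in>D. f z = Some w0}" using finite_subset by blast
    then have "count_preimages f D (Some w0) = \<infinity>" by (simp add: count_preimages_def)
    then show False using c0 by simp
  next
    case (enat k)
    have kk: "k \<ge> 1" "(deriv^^k) \<phi> z0 \<noteq> 0" "\<And>i. 0<i \<Longrightarrow> i<k \<Longrightarrow> (deriv^^i) \<phi> z0 = 0"
      using mult_enat[OF enat] by (auto simp: \<phi>_def)
    show False
    proof (cases "k = 1")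
      case True
      then have "deriv \<phi> z0 \<noteq> 0" using kk by simp
      then obtain r' where r': "r' > 0" "ball z0 r' \<subseteq> ball z0 r0" "inj_on \<phi> (ball z0 r')"
        using has_complex_derivative_locally_injective[OF hol[folded \<phi>_def] z0b open_ball] by blast
      have "inj_on f (ball z0 r')"
      proof (rule inj_onI)
        fix x y assume xy: "x \<in> ball z0 r'" "y \<in> ball z0 r'" "f x = f y"
        then have "x \<in> ball z0 r0" "y \<in> ball z0 r0" using r'(2) by auto
        then have "Some (\<phi> x) = Some (\<phi> y)" using f\<phi> xy(3) by simp
        then have "\<phi> x = \<phi> y" by simp
        then show "x = y" using inj_onD[OF r'(3)] xy(1,2) by blast
      qed
      then show False using crit r' unfolding critical_point_def by blast
    next
      case False
      then have k2: "k \<ge> 2" using kk by simp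
      obtain h r1 where r1: "0 < r1" and holh: "h holomorphic_on ball z0 r1"
        and fac: "\<And>w. w \<in> ball z0 r1 \<Longrightarrow> \<phi> w - \<phi> z0 = (w - z0)^k * h w"
        and hnz: "\<And>w. w \<in> ball z0 r1 \<Longrightarrow> h w \<noteq> 0"
        by (rule holomorphic_factor_order_of_zero[OF hol[folded \<phi>_def] open_ball z0b _ kk(2) kk(3)])
           (use kk in auto)
      define c where "c = h z0"
      have cnz: "c \<noteq> 0" using hnz r1 by (simp add: c_def)
      have cpos: "cmod c > 0" using cnz by simp
      obtain \<nu> where \<nu>: "cmod \<nu> = 1"
        and Sin: "\<forall>\<kappa>>0. \<exists>\<delta>>0. \<forall>x. cmod (x - z0) < \<delta> \<and> \<kappa> * cmod (x - z0) < Re ((x - z0) * cnj \<nu>) \<longrightarrow> x \<in> inside S"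
        using smooth_cones[OF sjS z0] by blast
      obtain \<mu> where \<mu>: "cmod \<mu> = 1"
        and Gin: "\<forall>\<kappa>>0. \<exists>\<delta>>0. \<forall>x. cmod (x - w0) < \<delta> \<and> \<kappa> * cmod (x - w0) < Re ((x - w0) * cnj \<mu>) \<longrightarrow> x \<in> inside \<Gamma>"
        and Gout: "\<forall>\<kappa>>0. \<exists>\<delta>>0. \<forall>x. cmod (x - w0) < \<delta> \<and> \<kappa> * cmod (x - w0) < - Re ((x - w0) * cnj \<mu>) \<longrightarrow> x \<in> outside \<Gamma>"
        using smooth_cones[OF sjG w0] by blast
      define \<mu>s where "\<mu>s = (if n_minus \<le> n_plus then \<mu> else - \<mu>)"
      have \<mu>s: "cmod \<mu>s = 1" using \<mu> by (simp add: \<mu>s_def)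
      have cs: "\<exists>\<delta>>0. \<forall>w. cmod (w - w0) < \<delta> \<and> \<kappa> * cmod (w - w0) < Re ((w - w0) * cnj \<mu>s) \<longrightarrow> count_preimages f D (Some w) = enat (min n_minus n_plus)"
        if \<kappa>: "\<kappa> > 0" for \<kappa>
      proof (cases "n_minus \<le> n_plus")
        case True
        obtain \<delta> where "\<delta> > 0" "\<forall>x. cmod (x - w0) < \<delta> \<and> \<kappa> * cmod (x - w0) < Re ((x - w0) * cnj \<mu>) \<longrightarrow> x \<in> inside \<Gamma>"
          using Gin \<kappa> by blast
        then show ?thesis using True hm by (intro exI[of _ \<delta>]) (auto simp: \<mu>s_def D_def)
      next
        case False
        obtain \<delta> where "\<delta> > 0" "\<forall>x. cmod (x - w0) < \<delta> \<and> \<kappa> * cmod (x - w0) < - Re ((x - w0) * cnj \<mu>) \<longrightarrow> x \<in> outside \<Gamma>"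
          using Gout \<kappa> by blast
        then show ?thesis using False hp by (intro exI[of _ \<delta>]) (auto simp: \<mu>s_def D_def)
      qed
      obtain u where u: "cmod u = 1" "Re (u * cnj \<nu>) \<ge> 1/2" "Re (u ^ k * c * cnj \<mu>s) \<ge> cmod c / 2"
        using angle_choice[OF k2 \<nu> \<mu>s cnz] by blast
      obtain \<delta>S where dS: "\<delta>S > 0" "\<forall>x. cmod (x - z0) < \<delta>S \<and> 1/4 * cmod (x - z0) < Re ((x - z0) * cnj \<nu>) \<longrightarrow> x \<in> inside S"
        using Sin[rule_format, of "1/4"] by auto
      obtain \<delta>G where dG: "\<delta>G > 0" "\<forall>w. cmod (w - w0) < \<delta>G \<and> 1/4 * cmod (w - w0) < Re ((w - w0) * cnj \<mu>s) \<longrightarrow> count_preimages f D (Some w) = enat (min n_minus n_plus)"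
        using cs[of "1/4"] by auto
      obtain e \<rho> where e: "e > 0" "\<rho> > 0"
        and K: "\<forall>q\<in>D. dist q z0 < \<rho> \<longrightarrow> near (Some w0) e (f q) \<longrightarrow> count_preimages f D (f q) \<ge> enat (min n_minus n_plus) + 1"
        using key[OF mf DG' oD bz(1) c0] by blast
      have "continuous_on (ball z0 r1) h" using holh holomorphic_on_imp_continuous_on by blast
      then have "isCont h z0" using r1 continuous_on_eq_continuous_at[of "ball z0 r1" h] by simp
      then have "(h \<longlongrightarrow> c) (at z0)" by (simp add: isCont_def c_def)
      then have "eventually (\<lambda>z. dist (h z) c < cmod c / 8) (at z0)" using cpos by (intro tendstoD) auto
      then obtain dh where dh: "dh > 0" "\<And>z. z \<noteq> z0 \<Longrightarrow> dist z z0 < dh \<Longrightarrow> dist (h z) c < cmod c / 8"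
        unfolding eventually_at by blast
      define M where "M = min e \<delta>G"
      have M: "M > 0" "M \<le> e" "M \<le> \<delta>G" using e dG by (auto simp: M_def)
      define mm where "mm = min (min (min \<delta>S \<rho>) (min r1 r0)) (min (min dh 1) (M / (4 * cmod c)))"
      have mmp: "mm > 0" using dS e r1 r0 dh M cpos by (simp add: mm_def)
      have mmb: "mm \<le> \<delta>S" "mm \<le> \<rho>" "mm \<le> r1" "mm \<le> r0" "mm \<le> dh" "mm \<le> 1" "mm \<le> M / (4 * cmod c)"
        unfolding mm_def by linarith+
      define r where "r = mm / 2"
      have rp: "r > 0" using mmp by (simp add: r_def)
      have rm: "r < mm" using mmp by (simp add: r_def)
      have rb: "r < \<delta>S" "r < \<rho>" "r < r1" "r < r0" "r < dh" "r \<le> 1" "r < M / (4 * cmod c)"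
        using rm mmb by linarith+
      define z where "z = z0 + of_real r * u"
      have zn: "cmod (z - z0) = r" using u rp by (simp add: z_def norm_mult)
      have zz: "z \<noteq> z0" using zn rp by auto
      have "Re ((z - z0) * cnj \<nu>) = r * Re (u * cnj \<nu>)" by (simp add: z_def mult.assoc)
      moreover have "r * (1/2) \<le> r * Re (u * cnj \<nu>)" using u rp by (simp add: mult_left_mono)
      ultimately have "1/4 * cmod (z - z0) < Re ((z - z0) * cnj \<nu>)" using zn rp by linarith
      then have zD: "z \<in> D" using dS zn rb by (simp add: D_def)
      have zb1: "z \<in> ball z0 r1" and zb0: "z \<in> ball z0 r0" using zn rb by (auto simp: dist_norm norm_minus_commute)
      have hz: "cmod (h z - c) < cmod c / 8" using dh(2)[OF zz] zn rb by (simp add: dist_norm)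
      have hzb: "cmod (h z) \<le> 9/8 * cmod c" using hz norm_triangle_ineq2[of "h z" c] by linarith
      have pz: "\<phi> z - w0 = of_real (r ^ k) * (u ^ k * h z)"
        using fac[OF zb1] \<phi>0 by (simp add: z_def power_mult_distrib)
      have nz: "cmod (\<phi> z - w0) = r ^ k * cmod (h z)" using u rp by (simp add: pz norm_mult norm_power)
      have rk: "r ^ k \<le> r" using power_decreasing[of 1 k r] kk rp rb by simp
      have rkp: "r ^ k > 0" using rp by simp
      have "cmod (\<phi> z - w0) \<le> r * (9/8 * cmod c)" unfolding nz
        by (rule mult_mono[OF rk hzb]) (use rp in auto)
      also have "\<dots> < M" 
      proof -
        have "r * (4 * cmod c) < M" using rb(7) cpos by (simp add: less_divide_eq)
        moreover have "r * (9/8 * cmod c) \<le> r * (4 * cmod c)" by (rule mult_left_mono) (use cpos rp in auto)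
        ultimately show ?thesis by linarith
      qed
      finally have small: "cmod (\<phi> z - w0) < M" .
      have nearz: "near (Some w0) e (f z)" using f\<phi>[OF zb0] small M by (simp add: near_def)
      have "Re ((\<phi> z - w0) * cnj \<mu>s) = r ^ k * Re (u ^ k * h z * cnj \<mu>s)" by (simp add: pz mult.assoc)
      moreover have "Re (u ^ k * h z * cnj \<mu>s) = Re (u ^ k * c * cnj \<mu>s) + Re (u ^ k * (h z - c) * cnj \<mu>s)"
        by (simp add: algebra_simps)
      moreover have "\<bar>Re (u ^ k * (h z - c) * cnj \<mu>s)\<bar> \<le> cmod (h z - c)"
        using abs_Re_le_cmod[of "u ^ k * (h z - c) * cnj \<mu>s"] u \<mu>s by (simp add: norm_mult norm_power)
      ultimately have X: "Re ((\<phi> z - w0) * cnj \<mu>s) = r ^ k * Re (u ^ k * h z * cnj \<mu>s)"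
        and Y: "Re (u ^ k * h z * cnj \<mu>s) \<ge> cmod c / 2 - cmod c / 8"
        using u(3) hz by linarith+
      have "r ^ k * (cmod c / 2 - cmod c / 8) \<le> r ^ k * Re (u ^ k * h z * cnj \<mu>s)"
        by (rule mult_left_mono[OF Y]) (use rkp in simp)
      then have "Re ((\<phi> z - w0) * cnj \<mu>s) \<ge> r ^ k * (cmod c / 2 - cmod c / 8)" using X by simp
      moreover have "1/4 * cmod (\<phi> z - w0) \<le> r ^ k * (9/32 * cmod c)" unfolding nz using hzb rkp by simp
      moreover have "r ^ k * (9/32 * cmod c) < r ^ k * (cmod c / 2 - cmod c / 8)" using rkp cpos by simp
      ultimately have "1/4 * cmod (\<phi> z - w0) < Re ((\<phi> z - w0) * cnj \<mu>s)" by linarith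
      then have cz: "count_preimages f D (Some (\<phi> z)) = enat (min n_minus n_plus)" using dG small M by simp
      have "count_preimages f D (f z) \<ge> enat (min n_minus n_plus) + 1" using K zD zn rb nearz by (simp add: dist_norm)
      then show False using cz f\<phi>[OF zb0] enat_contra by simp
    qed
  qed
qed


theorem mainTheorem3:
  fixes G S \<Gamma> :: "complex set" and f :: "complex \<Rightarrow> complex option"
    and n_minus n_plus :: nat
  assumes "open G" and "connected G" and "simply_connected G"
    and "smooth_jordan_curve S" and "S \<subseteq> G"
    and "smooth_jordan_curve \<Gamma>"
    and "meromorphic_sphere f G"
    and "\<forall>w\<in>inside \<Gamma>. count_preimages f (inside S) (Some w) = enat n_minus"
    and "\<forall>w\<in>outside \<Gamma>. count_preimages f (inside S) (Some w) = enat n_plus"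
    and "count_preimages f (inside S) None = enat n_plus"
    and "\<forall>w\<in>\<Gamma>. count_preimages f (inside S) (Some w) = enat (min n_minus n_plus)"
  shows "f ` S \<subseteq> Some ` \<Gamma> \<and> (\<forall>z\<in>S. \<not> critical_point f z)"
proof -
  have DG: "inside S \<subseteq> G" by (rule inside_sub_G[OF assms(3,4,5)])
  have A: "f z0 \<in> Some ` \<Gamma>" if "z0 \<in> S" for z0
    by (rule part1[OF assms(7) DG assms(4,5,6,8,9,10) that])
  have B: "\<not> critical_point f z0" if z0: "z0 \<in> S" for z0
  proof -
    obtain w0 where w0: "f z0 = Some w0" "w0 \<in> \<Gamma>" using A[OF z0] by blast
    show ?thesis by (rule part2[OF assms(7) DG assms(4,5,6,8,9,11) z0 w0])
  qed
  show ?thesis using A B by blast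
qed


end
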